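(* Let $f=(f_m)_{m\ge1}$ be a sequence of (sufficiently smooth and decaying) functions on $\mathbb{R}^n$. Then the BME operator $Q(f)$ (defined in weak form in the context) is given, for every $m\ge1$ and $v\in\mathbb{R}^n$, by $$Q_m(f)(v)=\sum_{\substack{m',m'_1\ge1\\ m'+m'_1\ge m+1}} A_{m',m'_1;m}\int_{\{(v_1,\Omega)\in\mathbb{R}^n\times\mathbb{S}^{n-1}:\,(v-v_1)\cdot\Omega\le0\}} B_{m,m_1}(v,v_1,\Omega)\, f_{m'}(v')\,f_{m'_1}(v'_1)\Big(\frac{m\,m_1}{m'm'_1}\Big)^{n/2}dv_1\,d\Omega$$ $$\qquad-\sum_{m_1=1}^\infty\sum_{m'=1}^{m+m_1-1}A_{m,m_1;m'}\int_{\{(v_1,\Omega)\in\mathbb{R}^n\times\mathbb{S}^{n-1}:\,(v-v_1)\cdot\Omega\le0\}} B_{m,m_1}(v,v_1,\Omega)\,f_m(v)\,f_{m_1}(v_1)\,dv_1\,d\Omega,$$ where in the first (gain) sum $m_1:=m'+m'_1-m\ (\ge1)$ and $(v',v'_1)$ are the post-collisional velocities obtained from $(m,v),(m_1,v_1),\Omega$ with outgoing masses $m',m'_1$ by the collision rule below. Consequently the equation $\frac{d}{dt}\sum_m\int f_m\varphi_m\,dv=\sum_m\int Q_m(f)\varphi_m\,dv$ for all test sequences is equivalent to $\frac{d}{dt}f_m(v)=Q_m(f)(v)$ for all $m\ge1$, $v\in\mathbb{R}^n$.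
   Context: Let $n\ge1$ be an integer. Particle masses are positive integers. Given masses $m,m_1\ge1$, an integer $m'\in\{1,\dots,m+m_1-1\}$, $m'_1:=m+m_1-m'$, velocities $v,v_1\in\mathbb{R}^n$ and $\Omega\in\mathbb{S}^{n-1}$ with $\Omega\cdot(v-v_1)\le0$, the collision rule gives $v'=\frac{mv+m_1v_1}{m+m_1}+\frac{(mm_1)^{1/2}}{m+m_1}\big(\frac{m'_1}{m'}\big)^{1/2}\big[v-v_1-2((v-v_1)\cdot\Omega)\Omega\big]$, $v'_1=\frac{mv+m_1v_1}{m+m_1}-\frac{(mm_1)^{1/2}}{m+m_1}\big(\frac{m'}{m'_1}\big)^{1/2}\big[v-v_1-2((v-v_1)\cdot\Omega)\Omega\big]$. Let $A_{m,m_1;m'}\ge0$ (for $m,m_1\ge1$, $1\le m'\le m+m_1-1$) satisfy $A_{m,m_1;m'}=A_{m_1,m;m'}=A_{m,m_1;m+m_1-m'}$, and let $\mathbf B\ge0$ be a function of $(E,c)\in[0,\infty)\times[-1,1]$. Write $B_{m,m_1}(v,v_1,\Omega):=\mathbf B\big(\frac{mm_1}{m+m_1}|v-v_1|^2,\ \Omega\cdot\frac{v-v_1}{|v-v_1|}\big)$. For a sequence $f=(f_m)_{m\ge1}$ of functions on $\mathbb{R}^n$, the BME (Boltzmann mass-exchange) operator $Q(f)=(Q_m(f))_{m\ge1}$ is defined in weak form by: for every sequence of test functions $\varphi=(\varphi_m)_{m\ge1}$, $$\sum_{m\ge1}\int_{\mathbb{R}^n}Q_m(f)\varphi_m\,dv=\frac12\sum_{m,m_1\ge1}\sum_{m'=1}^{m+m_1-1}A_{m,m_1;m'}\int_{\{(v,v_1,\Omega)\in\mathbb{R}^{2n}\times\mathbb{S}^{n-1}:(v-v_1)\cdot\Omega\le0\}}B_{m,m_1}(v,v_1,\Omega)\big(\varphi_{m'}(v')+\varphi_{m'_1}(v'_1)-\varphi_m(v)-\varphi_{m_1}(v_1)\big)f_m(v)f_{m_1}(v_1)\,dv\,dv_1\,d\Omega,$$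 with $m'_1,v',v'_1$ given by the collision rule. *)

theory Defs
  imports "HOL-Analysis.Analysis"
begin

text \<open>Surface measure on the unit sphere S^{n-1} of R^n (n = DIM('a)), defined by the
  standard cone construction: sigma(A) = n * lambda({y. 0 < |y| <= 1, y/|y| in A}).\<close>
definition sphere_measure :: "'a::euclidean_space measure" where
  "sphere_measure =
     scale_measure (of_nat DIM('a))
       (distr (restrict_space lborel (cball 0 1 - {0})) (restrict_space borel (sphere 0 1))
              (\<lambda>y. y /\<^sub>R norm y))"

text \<open>Collision rule: incoming (m,v),(m1,v1), direction Omega, outgoing masses m', m1' = m+m1-m'.\<close>
definition coll_v :: "nat \<Rightarrow> nat \<Rightarrow> nat \<Rightarrow> 'a \<Rightarrow> 'a \<Rightarrow> 'a \<Rightarrow> 'a::euclidean_space" where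
  "coll_v m m1 m' v v1 \<Omega> =
     (1 / real (m + m1)) *\<^sub>R (real m *\<^sub>R v + real m1 *\<^sub>R v1)
     + (sqrt (real m * real m1) / real (m + m1) * sqrt (real (m + m1 - m') / real m'))
         *\<^sub>R (v - v1 - (2 * ((v - v1) \<bullet> \<Omega>)) *\<^sub>R \<Omega>)"

definition coll_v1 :: "nat \<Rightarrow> nat \<Rightarrow> nat \<Rightarrow> 'a \<Rightarrow> 'a \<Rightarrow> 'a \<Rightarrow> 'a::euclidean_space" where
  "coll_v1 m m1 m' v v1 \<Omega> =
     (1 / real (m + m1)) *\<^sub>R (real m *\<^sub>R v + real m1 *\<^sub>R v1)
     - (sqrt (real m * real m1) / real (m + m1) * sqrt (real m' / real (m + m1 - m')))
         *\<^sub>R (v - v1 - (2 * ((v - v1) \<bullet> \<Omega>)) *\<^sub>R \<Omega>)"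

definition cross_B :: "(real \<Rightarrow> real \<Rightarrow> real) \<Rightarrow> nat \<Rightarrow> nat \<Rightarrow> 'a::euclidean_space \<Rightarrow> 'a \<Rightarrow> 'a \<Rightarrow> real" where
  "cross_B B m m1 v v1 \<Omega> =
     B (real m * real m1 / real (m + m1) * (norm (v - v1))\<^sup>2)
       (\<Omega> \<bullet> ((v - v1) /\<^sub>R norm (v - v1)))"

definition precoll :: "('a::euclidean_space \<times> 'a \<times> 'a) set" where
  "precoll = {(v, v1, \<Omega>). (v - v1) \<bullet> \<Omega> \<le> 0}"

definition BME_weak_rhs ::
  "(nat \<Rightarrow> nat \<Rightarrow> nat \<Rightarrow> real) \<Rightarrow> (real \<Rightarrow> real \<Rightarrow> real) \<Rightarrow> (nat \<Rightarrow> 'a::euclidean_space \<Rightarrow> real)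
    \<Rightarrow> (nat \<Rightarrow> 'a \<Rightarrow> real) \<Rightarrow> real" where
  "BME_weak_rhs A B f \<phi> =
     1/2 * (\<Sum>\<^sub>\<infinity>(m, m1)\<in>{1..} \<times> {1..}. \<Sum>m'=1..m+m1-1. A m m1 m' *
        set_lebesgue_integral (lborel \<Otimes>\<^sub>M lborel \<Otimes>\<^sub>M sphere_measure) precoll
          (\<lambda>(v, v1, \<Omega>). cross_B B m m1 v v1 \<Omega>
              * (\<phi> m' (coll_v m m1 m' v v1 \<Omega>) + \<phi> (m + m1 - m') (coll_v1 m m1 m' v v1 \<Omega>)
                 - \<phi> m v - \<phi> m1 v1)
              * f m v * f m1 v1))"

definition BME_strong ::
  "(nat \<Rightarrow> nat \<Rightarrow> nat \<Rightarrow> real) \<Rightarrow> (real \<Rightarrow> real \<Rightarrow> real) \<Rightarrow> (nat \<Rightarrow> 'a::euclidean_space \<Rightarrow> real)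
    \<Rightarrow> nat \<Rightarrow> 'a \<Rightarrow> real" where
  "BME_strong A B f m v =
     (\<Sum>\<^sub>\<infinity>(m', m1')\<in>{(p, q). 1 \<le> p \<and> 1 \<le> q \<and> m + 1 \<le> p + q}.
        A m' m1' m *
        set_lebesgue_integral (lborel \<Otimes>\<^sub>M sphere_measure) {(v1, \<Omega>). (v - v1) \<bullet> \<Omega> \<le> 0}
          (\<lambda>(v1, \<Omega>). cross_B B m (m' + m1' - m) v v1 \<Omega>
              * f m' (coll_v m (m' + m1' - m) m' v v1 \<Omega>)
              * f m1' (coll_v1 m (m' + m1' - m) m' v v1 \<Omega>)
              * (real m * real (m' + m1' - m) / (real m' * real m1')) powr (real DIM('a) / 2)))
   - (\<Sum>\<^sub>\<infinity>m1\<in>{1..}. \<Sum>m'=1..m+m1-1. A m m1 m' *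
        set_lebesgue_integral (lborel \<Otimes>\<^sub>M sphere_measure) {(v1, \<Omega>). (v - v1) \<bullet> \<Omega> \<le> 0}
          (\<lambda>(v1, \<Omega>). cross_B B m m1 v v1 \<Omega> * f m v * f m1 v1))"

end

theory Submission
  imports Defs
begin

lemma count_integral_eq_infsum:
  fixes f :: "'i \<Rightarrow> real"
  shows "integral\<^sup>L (count_space A) f = infsum f A"
proof (cases "integrable (count_space A) f")
  case True
  then have "Infinite_Set_Sum.abs_summable_on f A" by (simp add: Infinite_Set_Sum.abs_summable_on_def)
  then have "infsetsum f A = infsum f A" by (rule infsetsum_infsum)
  then show ?thesis by (simp add: infsetsum_def)
next
  case False
  then have "\<not> Infinite_Set_Sum.abs_summable_on f A" by (simp add: Infinite_Set_Sum.abs_summable_on_def)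
  then have "\<not> f summable_on A"
    using abs_summable_equivalent summable_on_iff_abs_summable_on_real by blast
  then show ?thesis using False by (simp add: infsum_not_exists not_integrable_integral_eq)
qed

lemma summable_of_nn_finite:
  fixes f :: "'i \<Rightarrow> real"
  assumes "(\<integral>\<^sup>+x. ennreal \<bar>f x\<bar> \<partial>count_space A) < \<infinity>"
  shows "f summable_on A"
proof -
  have "integrable (count_space A) f"
    using assms by (intro integrableI_bounded) auto
  then have "Infinite_Set_Sum.abs_summable_on f A" by (simp add: Infinite_Set_Sum.abs_summable_on_def)
  then show ?thesis
    using abs_summable_equivalent abs_summable_summable by blast
qed

lemma borel_measurable_infsum_countable:
  fixes g :: "'i \<Rightarrow> 'b \<Rightarrow> real"
  assumes J: "countable J" and g: "\<And>j. j \<in> J \<Longrightarrow> g j \<in> borel_measurable M"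
  shows "(\<lambda>x. infsum (\<lambda>j. g j x) J) \<in> borel_measurable M"
proof -
  interpret C: sigma_finite_measure "count_space J"
    using J by (rule sigma_finite_measure_count_space_countable)
  have m: "(\<lambda>y. g (snd y) (fst y)) \<in> borel_measurable (M \<Otimes>\<^sub>M count_space J)"
    by (rule measurable_compose_countable'[where f="\<lambda>i y. g i (fst y)" and g=snd and I=J])
       (use g J in auto)
  have "(\<lambda>x. \<integral>j. g j x \<partial>count_space J) \<in> borel_measurable M"
    by (rule C.borel_measurable_lebesgue_integral) (use m in \<open>simp add: case_prod_beta'\<close>)
  then show ?thesis by (simp add: count_integral_eq_infsum)
qed


lemma nn_count_le:
  assumes "a \<in> A"
  shows "f a \<le> (\<integral>\<^sup>+x. f x \<partial>count_space A)"
proof -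
  have "f a = (\<integral>\<^sup>+x. f x * indicator {a} x \<partial>count_space A)"
    using assms by simp
  also have "\<dots> \<le> (\<integral>\<^sup>+x. f x \<partial>count_space A)"
    by (intro nn_integral_mono) (auto split: split_indicator)
  finally show ?thesis .
qed

lemma GL:
  fixes h :: "nat \<Rightarrow> 'i \<Rightarrow> 'a::euclidean_space \<Rightarrow> 'b \<Rightarrow> real" and N :: "'b measure"
    and J :: "nat \<Rightarrow> 'i set"
  assumes sfN: "sigma_finite_measure N"
    and J: "\<And>m. countable (J m)"
    and meas: "\<And>m j. (\<lambda>(v, y). h m j v y) \<in> borel_measurable (lborel \<Otimes>\<^sub>M N)"
    and fin: "(\<integral>\<^sup>+m. (\<integral>\<^sup>+j. (\<integral>\<^sup>+z. ennreal \<bar>h m j (fst z) (snd z)\<bar> \<partial>(lborel \<Otimes>\<^sub>M N))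
                 \<partial>count_space (J m)) \<partial>count_space {1..}) < \<infinity>"
  shows "((\<lambda>m. \<integral>v. (\<Sum>\<^sub>\<infinity>j\<in>J m. \<integral>y. h m j v y \<partial>N) \<partial>lborel) has_sum
           (\<Sum>\<^sub>\<infinity>m\<in>{1..}. \<Sum>\<^sub>\<infinity>j\<in>J m. \<integral>z. h m j (fst z) (snd z) \<partial>(lborel \<Otimes>\<^sub>M N))) {1..}"
    and "\<And>m. 1 \<le> m \<Longrightarrow> AE v in lborel. (\<lambda>j. \<integral>y. h m j v y \<partial>N) summable_on J m"
    and "\<And>m. 1 \<le> m \<Longrightarrow> integrable lborel (\<lambda>v. \<Sum>\<^sub>\<infinity>j\<in>J m. \<integral>y. h m j v y \<partial>N)"
proof -
  interpret N: sigma_finite_measure N by (rule sfN)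
  interpret P: pair_sigma_finite lborel N ..
  define F where "F m = (\<integral>\<^sup>+j. (\<integral>\<^sup>+z. ennreal \<bar>h m j (fst z) (snd z)\<bar> \<partial>(lborel \<Otimes>\<^sub>M N))
                 \<partial>count_space (J m))" for m
  define X where "X m = (\<Sum>\<^sub>\<infinity>j\<in>J m. \<integral>z. h m j (fst z) (snd z) \<partial>(lborel \<Otimes>\<^sub>M N))" for m
  have Ffin: "F m < \<infinity>" if "1 \<le> m" for m
    using nn_count_le[of m "{1..}" F] fin that unfolding F_def by auto
  have measH: "(\<lambda>z. h m j (fst z) (snd z)) \<in> borel_measurable (lborel \<Otimes>\<^sub>M N)" for m j
    using meas[of m j] by (simp add: case_prod_beta')
  have measH1: "(\<lambda>v. \<integral>y. h m j v y \<partial>N) \<in> borel_measurable lborel" for m j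
    by (rule N.borel_measurable_lebesgue_integral) (rule meas)
  have key: "(\<integral>v. (\<Sum>\<^sub>\<infinity>j\<in>J m. \<integral>y. h m j v y \<partial>N) \<partial>lborel) = X m
       \<and> \<bar>X m\<bar> \<le> F m
       \<and> (AE v in lborel. (\<lambda>j. \<integral>y. h m j v y \<partial>N) summable_on J m)
       \<and> integrable lborel (\<lambda>v. \<Sum>\<^sub>\<infinity>j\<in>J m. \<integral>y. h m j v y \<partial>N)" if m: "1 \<le> m" for m
  proof -
    interpret C: sigma_finite_measure "count_space (J m)"
      using J by (rule sigma_finite_measure_count_space_countable)
    interpret Q: pair_sigma_finite "count_space (J m)" lborel ..
    define G where "G = (\<lambda>(j, v). \<integral>y. h m j v y \<partial>N)"
    have measG: "G \<in> borel_measurable (count_space (J m) \<Otimes>\<^sub>M lborel)"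
      unfolding G_def by (rule measurable_pair_measure_countable1[OF J]) (use measH1 in force)
    have fin_j: "(\<integral>\<^sup>+z. ennreal \<bar>h m j (fst z) (snd z)\<bar> \<partial>(lborel \<Otimes>\<^sub>M N)) < \<infinity>" if "j \<in> J m" for j
      using nn_count_le[OF that, of "\<lambda>j. (\<integral>\<^sup>+z. ennreal \<bar>h m j (fst z) (snd z)\<bar> \<partial>(lborel \<Otimes>\<^sub>M N))"]
        Ffin[OF m] unfolding F_def by auto
    have int_j: "integrable (lborel \<Otimes>\<^sub>M N) (\<lambda>z. h m j (fst z) (snd z))" if "j \<in> J m" for j
      using fin_j[OF that] measH by (intro integrableI_bounded) auto
    have bound1: "(\<integral>\<^sup>+v. ennreal \<bar>\<integral>y. h m j v y \<partial>N\<bar> \<partial>lborel)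
        \<le> (\<integral>\<^sup>+z. ennreal \<bar>h m j (fst z) (snd z)\<bar> \<partial>(lborel \<Otimes>\<^sub>M N))" for j
    proof -
      have "(\<integral>\<^sup>+v. ennreal \<bar>\<integral>y. h m j v y \<partial>N\<bar> \<partial>lborel)
          \<le> (\<integral>\<^sup>+v. (\<integral>\<^sup>+y. ennreal \<bar>h m j v y\<bar> \<partial>N) \<partial>lborel)"
      proof (intro nn_integral_mono)
        fix v
        show "ennreal \<bar>\<integral>y. h m j v y \<partial>N\<bar> \<le> (\<integral>\<^sup>+y. ennreal \<bar>h m j v y\<bar> \<partial>N)"
        proof (cases "integrable N (\<lambda>y. h m j v y)")
          case True
          then show ?thesis using integral_norm_bound_ennreal[OF True] by simp
        next
          case False
          then show ?thesis by (simp add: not_integrable_integral_eq)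
        qed
      qed
      also have "\<dots> = (\<integral>\<^sup>+z. ennreal \<bar>h m j (fst z) (snd z)\<bar> \<partial>(lborel \<Otimes>\<^sub>M N))"
        using N.nn_integral_fst[of "\<lambda>z. ennreal \<bar>h m j (fst z) (snd z)\<bar>" lborel] measH by simp
      finally show ?thesis .
    qed
    have nnG: "(\<integral>\<^sup>+z. ennreal (norm (G z)) \<partial>(count_space (J m) \<Otimes>\<^sub>M lborel))
       = (\<integral>\<^sup>+j. (\<integral>\<^sup>+v. ennreal \<bar>\<integral>y. h m j v y \<partial>N\<bar> \<partial>lborel) \<partial>count_space (J m))"
      by (subst lborel.nn_integral_fst[symmetric]) (use measG in \<open>auto simp: G_def\<close>)
    also have "\<dots> \<le> F m"
      unfolding F_def by (intro nn_integral_mono bound1)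
    finally have nnG_le: "(\<integral>\<^sup>+z. ennreal (norm (G z)) \<partial>(count_space (J m) \<Otimes>\<^sub>M lborel)) \<le> F m" .
    have intG: "integrable (count_space (J m) \<Otimes>\<^sub>M lborel) G"
      using nnG_le Ffin[OF m] measG by (intro integrableI_bounded) auto
    have intG': "integrable (count_space (J m) \<Otimes>\<^sub>M lborel) (\<lambda>(j, v). \<integral>y. h m j v y \<partial>N)"
      using intG by (simp add: G_def)
    have e1: "(\<integral>v. (\<integral>j. (\<integral>y. h m j v y \<partial>N) \<partial>count_space (J m)) \<partial>lborel)
            = integral\<^sup>L (count_space (J m) \<Otimes>\<^sub>M lborel) G"
      using Q.integral_snd[OF intG'] by (simp add: G_def)
    have e2: "(\<integral>j. (\<integral>v. (\<integral>y. h m j v y \<partial>N) \<partial>lborel) \<partial>count_space (J m))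
            = integral\<^sup>L (count_space (J m) \<Otimes>\<^sub>M lborel) G"
      using Q.integral_fst[OF intG'] by (simp add: G_def)
    have e3: "(\<integral>v. (\<integral>y. h m j v y \<partial>N) \<partial>lborel) = (\<integral>z. h m j (fst z) (snd z) \<partial>(lborel \<Otimes>\<^sub>M N))"
      if "j \<in> J m" for j
      using P.integral_fst'[OF int_j[OF that]] by simp
    have eqX: "integral\<^sup>L (count_space (J m) \<Otimes>\<^sub>M lborel) G = X m"
      unfolding X_def e2[symmetric] count_integral_eq_infsum
      by (intro infsum_cong e3)
    have A1: "(\<integral>v. (\<Sum>\<^sub>\<infinity>j\<in>J m. \<integral>y. h m j v y \<partial>N) \<partial>lborel) = X m"
      using e1 eqX by (simp add: count_integral_eq_infsum)
    have A2: "\<bar>X m\<bar> \<le> F m"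
    proof -
      have "ennreal \<bar>X m\<bar> = ennreal (norm (integral\<^sup>L (count_space (J m) \<Otimes>\<^sub>M lborel) G))"
        using eqX by simp
      also have "\<dots> \<le> (\<integral>\<^sup>+z. ennreal (norm (G z)) \<partial>(count_space (J m) \<Otimes>\<^sub>M lborel))"
        by (rule integral_norm_bound_ennreal[OF intG])
      also have "\<dots> \<le> F m" by (rule nnG_le)
      finally show ?thesis .
    qed
    have A3: "AE v in lborel. (\<lambda>j. \<integral>y. h m j v y \<partial>N) summable_on J m"
    proof -
      have "AE v in lborel. integrable (count_space (J m)) (\<lambda>j. \<integral>y. h m j v y \<partial>N)"
        by (rule Q.AE_integrable_snd[OF intG'])
      then show ?thesis
      proof (rule eventually_mono)
        fix v assume "integrable (count_space (J m)) (\<lambda>j. \<integral>y. h m j v y \<partial>N)"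
        then have "Infinite_Set_Sum.abs_summable_on (\<lambda>j. \<integral>y. h m j v y \<partial>N) (J m)"
          by (simp add: Infinite_Set_Sum.abs_summable_on_def)
        then show "(\<lambda>j. \<integral>y. h m j v y \<partial>N) summable_on J m"
          using abs_summable_equivalent abs_summable_summable by blast
      qed
    qed
    have A4: "integrable lborel (\<lambda>v. \<Sum>\<^sub>\<infinity>j\<in>J m. \<integral>y. h m j v y \<partial>N)"
      using Q.integrable_snd[OF intG'] by (simp add: count_integral_eq_infsum)
    show ?thesis using A1 A2 A3 A4 by blast
  qed
  show "\<And>m. 1 \<le> m \<Longrightarrow> AE v in lborel. (\<lambda>j. \<integral>y. h m j v y \<partial>N) summable_on J m"
    using key by blast
  show "\<And>m. 1 \<le> m \<Longrightarrow> integrable lborel (\<lambda>v. \<Sum>\<^sub>\<infinity>j\<in>J m. \<integral>y. h m j v y \<partial>N)"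
    using key by blast
  have sX: "X summable_on {1..}"
  proof (rule summable_of_nn_finite)
    have "(\<integral>\<^sup>+m. ennreal \<bar>X m\<bar> \<partial>count_space {1..}) \<le> (\<integral>\<^sup>+m. F m \<partial>count_space {1..})"
      using key by (intro nn_integral_mono) auto
    also have "\<dots> < \<infinity>" using fin unfolding F_def .
    finally show "(\<integral>\<^sup>+m. ennreal \<bar>X m\<bar> \<partial>count_space {1..}) < \<infinity>" .
  qed
  have "(X has_sum (\<Sum>\<^sub>\<infinity>m\<in>{1..}. X m)) {1..}" using sX by simp
  then show "((\<lambda>m. \<integral>v. (\<Sum>\<^sub>\<infinity>j\<in>J m. \<integral>y. h m j v y \<partial>N) \<partial>lborel) has_sum
           (\<Sum>\<^sub>\<infinity>m\<in>{1..}. \<Sum>\<^sub>\<infinity>j\<in>J m. \<integral>z. h m j (fst z) (snd z) \<partial>(lborel \<Otimes>\<^sub>M N))) {1..}"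
    unfolding X_def[symmetric] using key by (subst has_sum_cong) auto
qed


lemma coord_shear:
  fixes a b :: "'a::euclidean_space" and g :: "'a \<Rightarrow> ennreal"
  assumes b: "b \<in> Basis" and k: "1 + a \<bullet> b \<noteq> 0"
    and g[measurable]: "g \<in> borel_measurable borel"
  shows "(\<integral>\<^sup>+u. g (u + (u \<bullet> a) *\<^sub>R b) \<partial>lborel) = ennreal (1 / \<bar>1 + a \<bullet> b\<bar>) * (\<integral>\<^sup>+u. g u \<partial>lborel)"
proof -
  interpret PS: product_sigma_finite "\<lambda>_::'a. lborel :: real measure"
    by standard
  define \<kappa> where "\<kappa> = 1 + a \<bullet> b"
  define I where "I = Basis - {b}"
  have B: "(Basis::'a set) = insert b I" and bI: "b \<notin> I" and fI: "finite I"
    using b by (auto simp: I_def)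
  define E :: "('a \<Rightarrow> real) \<Rightarrow> 'a" where "E f = (\<Sum>b'\<in>Basis. f b' *\<^sub>R b')" for f
  define V :: "('a \<Rightarrow> real) \<Rightarrow> 'a" where "V f = (\<Sum>b'\<in>I. f b' *\<^sub>R b')" for f
  have [measurable]: "E \<in> borel_measurable (Pi\<^sub>M Basis (\<lambda>_. lborel))"
    unfolding E_def by measurable
  have [measurable]: "V \<in> borel_measurable (Pi\<^sub>M I (\<lambda>_. lborel))"
    unfolding V_def by measurable
  have EV: "E (x(b := y)) = V x + y *\<^sub>R b" for x y
  proof -
    have 1: "E (x(b := y)) = (x(b:=y)) b *\<^sub>R b + (\<Sum>b'\<in>I. (x(b:=y)) b' *\<^sub>R b')"
      unfolding E_def B using fI bI by (simp add: sum.insert)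
    have 2: "(\<Sum>b'\<in>I. (x(b:=y)) b' *\<^sub>R b') = V x"
      unfolding V_def using bI by (intro sum.cong) auto
    show ?thesis unfolding 1 2 fun_upd_same by (rule add.commute)
  qed
  have Vb: "V x \<bullet> b = 0" for x
    unfolding V_def using b bI by (auto simp: inner_sum_left inner_Basis I_def intro!: sum.neutral)
  have int_eq: "\<And>h. h \<in> borel_measurable borel \<Longrightarrow>
      (\<integral>\<^sup>+u. h u \<partial>lborel) = (\<integral>\<^sup>+x. (\<integral>\<^sup>+y. h (V x + y *\<^sub>R b) \<partial>lborel) \<partial>Pi\<^sub>M I (\<lambda>_. lborel))"
  proof -
    fix h :: "'a \<Rightarrow> ennreal" assume [measurable]: "h \<in> borel_measurable borel"
    have "(\<integral>\<^sup>+u. h u \<partial>lborel) = (\<integral>\<^sup>+f. h (E f) \<partial>Pi\<^sub>M Basis (\<lambda>_. lborel))"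
      by (subst lborel_eq) (simp add: nn_integral_distr E_def)
    also have "\<dots> = (\<integral>\<^sup>+f. h (E f) \<partial>Pi\<^sub>M (insert b I) (\<lambda>_. lborel))"
      using B by simp
    also have "\<dots> = (\<integral>\<^sup>+x. (\<integral>\<^sup>+y. h (E (x(b := y))) \<partial>lborel) \<partial>Pi\<^sub>M I (\<lambda>_. lborel))"
      by (rule PS.product_nn_integral_insert[OF fI bI]) (use B in simp)
    finally show "(\<integral>\<^sup>+u. h u \<partial>lborel) = (\<integral>\<^sup>+x. (\<integral>\<^sup>+y. h (V x + y *\<^sub>R b) \<partial>lborel) \<partial>Pi\<^sub>M I (\<lambda>_. lborel))"
      by (simp add: EV)
  qed
  have L: "(V x + y *\<^sub>R b) + ((V x + y *\<^sub>R b) \<bullet> a) *\<^sub>R b = V x + (V x \<bullet> a + \<kappa> * y) *\<^sub>R b" for x y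
    unfolding \<kappa>_def by (simp add: inner_add_left algebra_simps inner_commute)
  have inner: "(\<integral>\<^sup>+y. g (V x + (V x \<bullet> a + \<kappa> * y) *\<^sub>R b) \<partial>lborel)
      = ennreal (1 / \<bar>\<kappa>\<bar>) * (\<integral>\<^sup>+y. g (V x + y *\<^sub>R b) \<partial>lborel)" for x
  proof -
    have "(\<integral>\<^sup>+y. g (V x + y *\<^sub>R b) \<partial>lborel) = ennreal \<bar>\<kappa>\<bar> * (\<integral>\<^sup>+y. g (V x + (V x \<bullet> a + \<kappa> * y) *\<^sub>R b) \<partial>lborel)"
      using k unfolding \<kappa>_def[symmetric]
      by (intro nn_integral_real_affine[where f="\<lambda>z. g (V x + z *\<^sub>R b)"]) auto
    then have "ennreal (1 / \<bar>\<kappa>\<bar>) * (\<integral>\<^sup>+y. g (V x + y *\<^sub>R b) \<partial>lborel)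
        = (ennreal (1 / \<bar>\<kappa>\<bar>) * ennreal \<bar>\<kappa>\<bar>) * (\<integral>\<^sup>+y. g (V x + (V x \<bullet> a + \<kappa> * y) *\<^sub>R b) \<partial>lborel)"
      by (simp add: mult.assoc)
    also have "ennreal (1 / \<bar>\<kappa>\<bar>) * ennreal \<bar>\<kappa>\<bar> = 1"
      using k unfolding \<kappa>_def[symmetric] by (simp add: ennreal_mult[symmetric])
    finally show ?thesis by simp
  qed
  have "(\<integral>\<^sup>+u. g (u + (u \<bullet> a) *\<^sub>R b) \<partial>lborel)
      = (\<integral>\<^sup>+x. (\<integral>\<^sup>+y. g (V x + (V x \<bullet> a + \<kappa> * y) *\<^sub>R b) \<partial>lborel) \<partial>Pi\<^sub>M I (\<lambda>_. lborel))"
    by (subst int_eq) (auto simp: L)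
  also have "\<dots> = (\<integral>\<^sup>+x. ennreal (1 / \<bar>\<kappa>\<bar>) * (\<integral>\<^sup>+y. g (V x + y *\<^sub>R b) \<partial>lborel) \<partial>Pi\<^sub>M I (\<lambda>_. lborel))"
    by (simp add: inner)
  also have "\<dots> = ennreal (1 / \<bar>\<kappa>\<bar>) * (\<integral>\<^sup>+x. (\<integral>\<^sup>+y. g (V x + y *\<^sub>R b) \<partial>lborel) \<partial>Pi\<^sub>M I (\<lambda>_. lborel))"
    by (rule nn_integral_cmult) measurable
  also have "\<dots> = ennreal (1 / \<bar>\<kappa>\<bar>) * (\<integral>\<^sup>+u. g u \<partial>lborel)"
    by (subst int_eq[OF g]) simp
  finally show ?thesis unfolding \<kappa>_def .
qed


definition scales :: "'a measure \<Rightarrow> ('a \<Rightarrow> 'a) \<Rightarrow> ennreal \<Rightarrow> bool" where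
  "scales M L c \<longleftrightarrow> L \<in> measurable M M \<and>
     (\<forall>g::'a \<Rightarrow> ennreal. g \<in> borel_measurable M \<longrightarrow> (\<integral>\<^sup>+x. g (L x) \<partial>M) = c * (\<integral>\<^sup>+x. g x \<partial>M))"

lemma scalesI:
  assumes "L \<in> measurable M M"
    and "\<And>g::'a \<Rightarrow> ennreal. g \<in> borel_measurable M \<Longrightarrow> (\<integral>\<^sup>+x. g (L x) \<partial>M) = c * (\<integral>\<^sup>+x. g x \<partial>M)"
  shows "scales M L c"
  using assms unfolding scales_def by blast

lemma scalesD:
  assumes "scales M L c"
  shows "L \<in> measurable M M"
    and "\<And>g::'a \<Rightarrow> ennreal. g \<in> borel_measurable M \<Longrightarrow> (\<integral>\<^sup>+x. g (L x) \<partial>M) = c * (\<integral>\<^sup>+x. g x \<partial>M)"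
  using assms unfolding scales_def by blast+

lemma scales_comp:
  assumes 1: "scales M L1 c1" and 2: "scales M L2 c2"
  shows "scales M (\<lambda>x. L2 (L1 x)) (c1 * c2)"
proof (rule scalesI)
  show "(\<lambda>x. L2 (L1 x)) \<in> measurable M M"
    using scalesD(1)[OF 1] scalesD(1)[OF 2] by (rule measurable_compose)
  fix g :: "'a \<Rightarrow> ennreal" assume g: "g \<in> borel_measurable M"
  have gL2: "(\<lambda>x. g (L2 x)) \<in> borel_measurable M"
    using scalesD(1)[OF 2] g by (rule measurable_compose)
  have "(\<integral>\<^sup>+x. g (L2 (L1 x)) \<partial>M) = c1 * (\<integral>\<^sup>+x. g (L2 x) \<partial>M)"
    using scalesD(2)[OF 1 gL2] .
  also have "\<dots> = c1 * (c2 * (\<integral>\<^sup>+x. g x \<partial>M))"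
    using scalesD(2)[OF 2 g] by simp
  finally show "(\<integral>\<^sup>+x. g (L2 (L1 x)) \<partial>M) = c1 * c2 * (\<integral>\<^sup>+x. g x \<partial>M)"
    by (simp add: mult.assoc)
qed

lemma scales_cong:
  assumes "scales M L c" and "\<And>x. x \<in> space M \<Longrightarrow> L x = L' x" and "c = c'"
  shows "scales M L' c'"
proof (rule scalesI)
  show "L' \<in> measurable M M"
    using scalesD(1)[OF assms(1)] assms(2) by (metis measurable_cong)
  fix g :: "'a \<Rightarrow> ennreal" assume g: "g \<in> borel_measurable M"
  have "(\<integral>\<^sup>+x. g (L' x) \<partial>M) = (\<integral>\<^sup>+x. g (L x) \<partial>M)"
    using assms(2) by (intro nn_integral_cong) simp
  then show "(\<integral>\<^sup>+x. g (L' x) \<partial>M) = c' * (\<integral>\<^sup>+x. g x \<partial>M)"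
    using scalesD(2)[OF assms(1) g] assms(3) by simp
qed

lemma scales_lborel_shear:
  fixes a b :: "'a::euclidean_space"
  assumes b: "b \<in> Basis" and k: "1 + a \<bullet> b \<noteq> 0"
  shows "scales lborel (\<lambda>u. u + (u \<bullet> a) *\<^sub>R b) (ennreal (1 / \<bar>1 + a \<bullet> b\<bar>))"
proof (rule scalesI)
  show "(\<lambda>u. u + (u \<bullet> a) *\<^sub>R b) \<in> measurable lborel lborel" by simp
  fix g :: "'a \<Rightarrow> ennreal" assume "g \<in> borel_measurable lborel"
  then have "g \<in> borel_measurable borel" by simp
  then show "(\<integral>\<^sup>+x. g (x + (x \<bullet> a) *\<^sub>R b) \<partial>lborel) = ennreal (1 / \<bar>1 + a \<bullet> b\<bar>) * (\<integral>\<^sup>+x. g x \<partial>lborel)"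
    by (rule coord_shear[OF b k])
qed

lemma scales_lborel_affine:
  fixes t :: "'a::euclidean_space"
  assumes c: "c \<noteq> 0"
  shows "scales lborel (\<lambda>u. t + c *\<^sub>R u) (ennreal (1 / \<bar>c\<bar> ^ DIM('a)))"
proof (rule scalesI)
  show "(\<lambda>u. t + c *\<^sub>R u) \<in> measurable lborel lborel" by simp
  fix g :: "'a \<Rightarrow> ennreal" assume "g \<in> borel_measurable lborel"
  then have g[measurable]: "g \<in> borel_measurable borel" by simp
  have "(\<integral>\<^sup>+x. g x \<partial>lborel) = ennreal (\<bar>c\<bar> ^ DIM('a)) * (\<integral>\<^sup>+x. g (t + c *\<^sub>R x) \<partial>lborel)"
    by (subst lborel_affine[OF c, of t]) (simp add: nn_integral_density nn_integral_distr nn_integral_cmult)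
  then have "ennreal (1 / \<bar>c\<bar> ^ DIM('a)) * (\<integral>\<^sup>+x. g x \<partial>lborel)
      = (ennreal (1 / \<bar>c\<bar> ^ DIM('a)) * ennreal (\<bar>c\<bar> ^ DIM('a))) * (\<integral>\<^sup>+x. g (t + c *\<^sub>R x) \<partial>lborel)"
    by (simp add: mult.assoc)
  also have "ennreal (1 / \<bar>c\<bar> ^ DIM('a)) * ennreal (\<bar>c\<bar> ^ DIM('a)) = 1"
    using c by (simp add: ennreal_mult[symmetric])
  finally show "(\<integral>\<^sup>+x. g (t + c *\<^sub>R x) \<partial>lborel) = ennreal (1 / \<bar>c\<bar> ^ DIM('a)) * (\<integral>\<^sup>+x. g x \<partial>lborel)"
    by simp
qed

lemma scales_lborel_colshear:
  fixes d e :: "'a::euclidean_space"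
  assumes e: "e \<in> Basis" and S: "S \<subseteq> Basis - {e}"
  shows "scales lborel (\<lambda>u. u + (u \<bullet> e) *\<^sub>R (\<Sum>b\<in>S. (d \<bullet> b) *\<^sub>R b)) 1"
proof -
  have "finite S" using S finite_Basis by (metis finite_Diff finite_subset)
  then show ?thesis using S
  proof (induction S)
    case empty
    show ?case by (rule scales_cong[OF scales_lborel_affine[of 1 0]]) auto
  next
    case (insert b S)
    have b: "b \<in> Basis" "b \<noteq> e" using insert by auto
    have IH: "scales lborel (\<lambda>u. u + (u \<bullet> e) *\<^sub>R (\<Sum>b\<in>S. (d \<bullet> b) *\<^sub>R b)) 1"
      using insert by auto
    have sh: "scales lborel (\<lambda>u. u + (u \<bullet> ((d \<bullet> b) *\<^sub>R e)) *\<^sub>R b) 1"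
      using scales_lborel_shear[OF b(1), of "(d \<bullet> b) *\<^sub>R e"] b e by (simp add: inner_Basis)
    have De: "(\<Sum>b\<in>S. (d \<bullet> b) *\<^sub>R b) \<bullet> e = 0"
      unfolding inner_sum_left
    proof (intro sum.neutral ballI)
      fix x assume "x \<in> S"
      then have "x \<in> Basis" "x \<noteq> e" using insert.prems by auto
      then show "((d \<bullet> x) *\<^sub>R x) \<bullet> e = 0" using e by (simp add: inner_Basis)
    qed
    show ?case
    proof (rule scales_cong[OF scales_comp[OF IH sh]])
      fix u :: 'a
      show "(u + (u \<bullet> e) *\<^sub>R (\<Sum>b\<in>S. (d \<bullet> b) *\<^sub>R b)) +
          ((u + (u \<bullet> e) *\<^sub>R (\<Sum>b\<in>S. (d \<bullet> b) *\<^sub>R b)) \<bullet> ((d \<bullet> b) *\<^sub>R e)) *\<^sub>R b =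
          u + (u \<bullet> e) *\<^sub>R (\<Sum>b\<in>insert b S. (d \<bullet> b) *\<^sub>R b)"
        using insert.hyps De e
        by (simp add: inner_add_left inner_commute[of _ e] algebra_simps inner_Basis sum.insert)
    qed simp
  qed
qed

lemma scales_lborel_colshear':
  fixes d e :: "'a::euclidean_space"
  assumes e: "e \<in> Basis" and de: "d \<bullet> e = 0"
  shows "scales lborel (\<lambda>u. u + (u \<bullet> e) *\<^sub>R d) 1"
proof -
  have "(\<Sum>b\<in>Basis - {e}. (d \<bullet> b) *\<^sub>R b) = (\<Sum>b\<in>Basis. (d \<bullet> b) *\<^sub>R b)"
    using e de by (intro sum.mono_neutral_left) auto
  also have "\<dots> = d" by (rule euclidean_representation)
  finally show ?thesis
    using scales_lborel_colshear[OF e order_refl, of d] by simp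
qed


lemma scales_lborel_reflect:
  fixes \<Omega> :: "'a::euclidean_space"
  assumes n: "norm \<Omega> = 1"
  shows "scales lborel (\<lambda>u. u - (2 * (u \<bullet> \<Omega>)) *\<^sub>R \<Omega>) 1"
proof -
  have "\<Omega> \<noteq> 0" using n by auto
  then obtain e where e: "e \<in> Basis" and \<alpha>0: "\<Omega> \<bullet> e \<noteq> 0"
    using euclidean_all_zero_iff by blast
  define \<alpha> where "\<alpha> = \<Omega> \<bullet> e"
  define \<beta> where "\<beta> = \<Omega> - \<alpha> *\<^sub>R e"
  have ee: "e \<bullet> e = 1" using e by simp
  have \<beta>e: "\<beta> \<bullet> e = 0" unfolding \<beta>_def \<alpha>_def using ee by (simp add: inner_diff_left)
  have \<Omega>eq: "\<Omega> = \<alpha> *\<^sub>R e + \<beta>" unfolding \<beta>_def by simp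
  have \<beta>\<beta>: "\<beta> \<bullet> \<beta> = 1 - \<alpha>\<^sup>2"
  proof -
    have "1 = \<Omega> \<bullet> \<Omega>" using n by (simp add: dot_square_norm)
    also have "\<Omega> \<bullet> \<Omega> = \<alpha>\<^sup>2 * (e \<bullet> e) + 2 * \<alpha> * (\<beta> \<bullet> e) + \<beta> \<bullet> \<beta>"
      unfolding \<Omega>eq by (simp add: inner_add_left inner_add_right inner_commute power2_eq_square algebra_simps)
    finally show ?thesis using ee \<beta>e by simp
  qed
  have \<alpha>: "\<alpha> \<noteq> 0" using \<alpha>0 unfolding \<alpha>_def .
  define a where "a = (-2) *\<^sub>R e - (2 * \<alpha>) *\<^sub>R \<beta>"
  have ae: "1 + a \<bullet> e = -1" unfolding a_def using ee \<beta>e by (simp add: inner_diff_left)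
  have C1: "scales lborel (\<lambda>u. u + (u \<bullet> e) *\<^sub>R ((- 1 / \<alpha>) *\<^sub>R \<beta>)) 1"
    by (rule scales_lborel_colshear'[OF e]) (simp add: \<beta>e)
  have Sh: "scales lborel (\<lambda>u. u + (u \<bullet> a) *\<^sub>R e) 1"
    using scales_lborel_shear[OF e, of a] ae by simp
  have C2: "scales lborel (\<lambda>u. u + (u \<bullet> e) *\<^sub>R ((1 / \<alpha>) *\<^sub>R \<beta>)) 1"
    by (rule scales_lborel_colshear'[OF e]) (simp add: \<beta>e)
  have comp: "scales lborel (\<lambda>u. (\<lambda>u. u + (u \<bullet> e) *\<^sub>R ((1 / \<alpha>) *\<^sub>R \<beta>))
      ((\<lambda>u. u + (u \<bullet> a) *\<^sub>R e) ((\<lambda>u. u + (u \<bullet> e) *\<^sub>R ((- 1 / \<alpha>) *\<^sub>R \<beta>)) u))) 1"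
    using scales_comp[OF scales_comp[OF C1 Sh] C2] by simp
  show ?thesis
  proof (rule scales_cong[OF comp])
    fix u :: 'a
    define x where "x = u \<bullet> e"
    define t where "t = u \<bullet> \<beta>"
    define u1 where "u1 = u + (u \<bullet> e) *\<^sub>R ((- 1 / \<alpha>) *\<^sub>R \<beta>)"
    have u1e: "u1 \<bullet> e = x" unfolding u1_def x_def using \<beta>e by (simp add: inner_add_left inner_diff_left)
    have u1\<beta>: "u1 \<bullet> \<beta> = t - x / \<alpha> * (1 - \<alpha>\<^sup>2)"
      unfolding u1_def x_def t_def using \<beta>\<beta> by (simp add: inner_add_left inner_diff_left)
    have u1a: "u1 \<bullet> a = -2 * \<alpha> * (\<alpha> * x + t)"
      unfolding a_def using u1e u1\<beta> \<alpha>
      by (simp add: inner_diff_right inner_commute[of u1] field_simps power2_eq_square)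
    define s where "s = u1 \<bullet> a"
    define u2 where "u2 = u1 + s *\<^sub>R e"
    have u2e: "u2 \<bullet> e = x + s" unfolding u2_def using u1e ee by (simp add: inner_add_left)
    have uO: "u \<bullet> \<Omega> = \<alpha> * x + t"
      unfolding \<Omega>eq x_def t_def by (simp add: inner_add_right)
    have u1': "u1 = u - (x / \<alpha>) *\<^sub>R \<beta>" unfolding u1_def x_def by simp
    have sd: "s / \<alpha> = -2 * (\<alpha> * x + t)" unfolding s_def u1a using \<alpha> by simp
    have "u2 + (u2 \<bullet> e) *\<^sub>R ((1 / \<alpha>) *\<^sub>R \<beta>) = u + s *\<^sub>R e + ((x + s) / \<alpha> - x / \<alpha>) *\<^sub>R \<beta>"
      unfolding u2e unfolding u2_def u1' by (simp add: scaleR_diff_left)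
    also have "(x + s) / \<alpha> - x / \<alpha> = s / \<alpha>" by (simp add: add_divide_distrib)
    also have "u + s *\<^sub>R e + (s / \<alpha>) *\<^sub>R \<beta> = u - (2 * (u \<bullet> \<Omega>)) *\<^sub>R \<Omega>"
      unfolding sd uO unfolding s_def u1a \<Omega>eq
      by (simp add: scaleR_add_right scaleR_diff_right) (simp add: algebra_simps)
    finally show "(\<lambda>u. u + (u \<bullet> e) *\<^sub>R ((1 / \<alpha>) *\<^sub>R \<beta>))
      ((\<lambda>u. u + (u \<bullet> a) *\<^sub>R e) ((\<lambda>u. u + (u \<bullet> e) *\<^sub>R ((- 1 / \<alpha>) *\<^sub>R \<beta>)) u)) =
      u - (2 * (u \<bullet> \<Omega>)) *\<^sub>R \<Omega>"
      unfolding u2_def s_def u1_def by simp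
  qed simp
qed

lemma scales_lborel_kreflect:
  fixes \<Omega> :: "'a::euclidean_space"
  assumes n: "norm \<Omega> = 1" and k: "k > 0"
  shows "scales lborel (\<lambda>u. k *\<^sub>R (u - (2 * (u \<bullet> \<Omega>)) *\<^sub>R \<Omega>)) (ennreal (1 / k ^ DIM('a)))"
  using scales_comp[OF scales_lborel_reflect[OF n] scales_lborel_affine[of k 0]] k by simp

lemma scales_fib2:
  assumes sfY: "sigma_finite_measure Y"
    and F: "(\<lambda>z. F (fst z) (snd z)) \<in> measurable (M \<Otimes>\<^sub>M Y) Y"
    and sc: "\<And>x. x \<in> space M \<Longrightarrow> scales Y (F x) c"
  shows "scales (M \<Otimes>\<^sub>M Y) (\<lambda>z. (fst z, F (fst z) (snd z))) c"
proof (rule scalesI)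
  interpret Y: sigma_finite_measure Y by (rule sfY)
  show Fm: "(\<lambda>z. (fst z, F (fst z) (snd z))) \<in> measurable (M \<Otimes>\<^sub>M Y) (M \<Otimes>\<^sub>M Y)"
    using F by (intro measurable_Pair) auto
  fix g :: "_ \<Rightarrow> ennreal" assume g: "g \<in> borel_measurable (M \<Otimes>\<^sub>M Y)"
  have gF: "(\<lambda>z. g (fst z, F (fst z) (snd z))) \<in> borel_measurable (M \<Otimes>\<^sub>M Y)"
    using Fm g by (rule measurable_compose)
  have "(\<integral>\<^sup>+z. g (fst z, F (fst z) (snd z)) \<partial>(M \<Otimes>\<^sub>M Y)) = (\<integral>\<^sup>+x. (\<integral>\<^sup>+y. g (x, F x y) \<partial>Y) \<partial>M)"
    using Y.nn_integral_fst[OF gF] by simp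
  also have "\<dots> = (\<integral>\<^sup>+x. c * (\<integral>\<^sup>+y. g (x, y) \<partial>Y) \<partial>M)"
  proof (rule nn_integral_cong)
    fix x assume x: "x \<in> space M"
    have "(\<lambda>y. g (x, y)) \<in> borel_measurable Y"
      using g x by (rule measurable_Pair2)
    then show "(\<integral>\<^sup>+y. g (x, F x y) \<partial>Y) = c * (\<integral>\<^sup>+y. g (x, y) \<partial>Y)"
      using scalesD(2)[OF sc[OF x]] by blast
  qed
  also have "\<dots> = c * (\<integral>\<^sup>+x. (\<integral>\<^sup>+y. g (x, y) \<partial>Y) \<partial>M)"
    by (rule nn_integral_cmult) (use g in \<open>simp add: Y.borel_measurable_nn_integral_fst\<close>)
  also have "\<dots> = c * (\<integral>\<^sup>+z. g z \<partial>(M \<Otimes>\<^sub>M Y))"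
    using Y.nn_integral_fst[OF g] by simp
  finally show "(\<integral>\<^sup>+z. g (fst z, F (fst z) (snd z)) \<partial>(M \<Otimes>\<^sub>M Y)) = c * (\<integral>\<^sup>+z. g z \<partial>(M \<Otimes>\<^sub>M Y))" .
qed

lemma scales_fib1:
  assumes sfM: "sigma_finite_measure M" and sfY: "sigma_finite_measure Y"
    and F: "(\<lambda>z. F (snd z) (fst z)) \<in> measurable (M \<Otimes>\<^sub>M Y) M"
    and sc: "\<And>y. y \<in> space Y \<Longrightarrow> scales M (F y) c"
  shows "scales (M \<Otimes>\<^sub>M Y) (\<lambda>z. (F (snd z) (fst z), snd z)) c"
proof (rule scalesI)
  interpret M: sigma_finite_measure M by (rule sfM)
  interpret Y: sigma_finite_measure Y by (rule sfY)
  interpret P: pair_sigma_finite M Y ..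
  show Fm: "(\<lambda>z. (F (snd z) (fst z), snd z)) \<in> measurable (M \<Otimes>\<^sub>M Y) (M \<Otimes>\<^sub>M Y)"
    using F by (intro measurable_Pair) auto
  fix g :: "_ \<Rightarrow> ennreal" assume g: "g \<in> borel_measurable (M \<Otimes>\<^sub>M Y)"
  have gF: "(\<lambda>z. g (F (snd z) (fst z), snd z)) \<in> borel_measurable (M \<Otimes>\<^sub>M Y)"
    using Fm g by (rule measurable_compose)
  have gs: "(\<lambda>z. g (snd z, fst z)) \<in> borel_measurable (Y \<Otimes>\<^sub>M M)"
    using measurable_pair_swap[OF g] by simp
  have "(\<integral>\<^sup>+z. g (F (snd z) (fst z), snd z) \<partial>(M \<Otimes>\<^sub>M Y)) = (\<integral>\<^sup>+y. (\<integral>\<^sup>+x. g (F y x, y) \<partial>M) \<partial>Y)"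
    using P.nn_integral_snd[OF gF] by simp
  also have "\<dots> = (\<integral>\<^sup>+y. c * (\<integral>\<^sup>+x. g (x, y) \<partial>M) \<partial>Y)"
  proof (rule nn_integral_cong)
    fix y assume y: "y \<in> space Y"
    have "(\<lambda>x. g (x, y)) \<in> borel_measurable M"
      using g y by (rule measurable_Pair1)
    then show "(\<integral>\<^sup>+x. g (F y x, y) \<partial>M) = c * (\<integral>\<^sup>+x. g (x, y) \<partial>M)"
      using scalesD(2)[OF sc[OF y]] by blast
  qed
  also have "\<dots> = c * (\<integral>\<^sup>+y. (\<integral>\<^sup>+x. g (x, y) \<partial>M) \<partial>Y)"
    by (rule nn_integral_cmult) (use M.borel_measurable_nn_integral_fst[OF gs] in simp)
  also have "\<dots> = c * (\<integral>\<^sup>+z. g z \<partial>(M \<Otimes>\<^sub>M Y))"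
    using P.nn_integral_snd[OF g] by simp
  finally show "(\<integral>\<^sup>+z. g (F (snd z) (fst z), snd z) \<partial>(M \<Otimes>\<^sub>M Y)) = c * (\<integral>\<^sup>+z. g z \<partial>(M \<Otimes>\<^sub>M Y))" .
qed


definition nrm :: "'a::euclidean_space \<Rightarrow> 'a" where "nrm y = y /\<^sub>R norm y"

lemma nrm_meas:
  "(nrm :: 'a::euclidean_space \<Rightarrow> 'a) \<in> measurable (restrict_space lborel (cball 0 1 - {0})) (restrict_space borel (sphere 0 1))"
proof (rule measurable_restrict_space2)
  show "nrm \<in> space (restrict_space lborel (cball (0::'a) 1 - {0})) \<rightarrow> sphere 0 1"
    by (auto simp: nrm_def space_restrict_space)
  show "nrm \<in> measurable (restrict_space lborel (cball (0::'a) 1 - {0})) borel"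
    by (rule measurable_restrict_space1) (unfold nrm_def[abs_def], measurable)
qed

lemma sphere_measure_alt:
  "(sphere_measure :: 'a::euclidean_space measure) = scale_measure (of_nat DIM('a))
     (distr (restrict_space lborel (cball 0 1 - {0})) (restrict_space borel (sphere 0 1)) nrm)"
  unfolding sphere_measure_def nrm_def[abs_def] ..

lemma space_sphere_measure[simp]: "space (sphere_measure :: 'a::euclidean_space measure) = sphere 0 1"
  by (simp add: sphere_measure_alt space_scale_measure space_restrict_space)

lemma sets_sphere_measure[simp, measurable_cong]:
  "sets (sphere_measure :: 'a::euclidean_space measure) = sets (restrict_space borel (sphere 0 1))"
  by (simp add: sphere_measure_alt)

lemma nn_integral_sphere:
  fixes g :: "'a::euclidean_space \<Rightarrow> ennreal"
  assumes g: "g \<in> borel_measurable sphere_measure"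
  shows "(\<integral>\<^sup>+x. g x \<partial>sphere_measure) = of_nat DIM('a) * (\<integral>\<^sup>+y. g (nrm y) * indicator (cball 0 1 - {0}) y \<partial>lborel)"
proof -
  have g': "g \<in> borel_measurable (restrict_space borel (sphere (0::'a) 1))"
    using g by (simp cong: measurable_cong_sets)
  have "(\<integral>\<^sup>+x. g x \<partial>sphere_measure) = of_nat DIM('a) *
     (\<integral>\<^sup>+x. g x \<partial>distr (restrict_space lborel (cball 0 1 - {0})) (restrict_space borel (sphere 0 1)) nrm)"
    unfolding sphere_measure_alt by (rule nn_integral_scale_measure) (simp add: g' cong: measurable_cong_sets)
  also have "(\<integral>\<^sup>+x. g x \<partial>distr (restrict_space lborel (cball 0 1 - {0})) (restrict_space borel (sphere 0 1)) nrm)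
      = (\<integral>\<^sup>+y. g (nrm y) \<partial>restrict_space lborel (cball 0 1 - {0}))"
    by (rule nn_integral_distr[OF nrm_meas]) (simp add: g' measurable_distr_eq1)
  also have "\<dots> = (\<integral>\<^sup>+y. g (nrm y) * indicator (cball 0 1 - {0}) y \<partial>lborel)"
    by (rule nn_integral_restrict_space) simp
  finally show ?thesis .
qed

lemma finite_measure_sphere: "finite_measure (sphere_measure :: 'a::euclidean_space measure)"
proof (rule finite_measureI)
  have "emeasure (sphere_measure :: 'a measure) (space (sphere_measure :: 'a measure)) = (\<integral>\<^sup>+x. 1 \<partial>(sphere_measure :: 'a measure))"
    by simp
  also have "\<dots> = of_nat DIM('a) * (\<integral>\<^sup>+y. indicator (cball (0::'a) 1 - {0}) y \<partial>lborel)"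
    by (subst nn_integral_sphere) auto
  also have "\<dots> = of_nat DIM('a) * emeasure lborel (cball (0::'a) 1 - {0})"
    by simp
  also have "\<dots> \<le> of_nat DIM('a) * emeasure lborel (cball (0::'a) 1)"
    by (intro mult_left_mono emeasure_mono) auto
  also have "\<dots> < \<infinity>"
    using emeasure_lborel_cball_finite[of "0::'a" 1] by (simp add: ennreal_mult_less_top of_nat_less_top)
  finally show "emeasure (sphere_measure :: 'a measure) (space (sphere_measure :: 'a measure)) \<noteq> \<infinity>" by simp
qed

lemma sigma_finite_sphere: "sigma_finite_measure (sphere_measure :: 'a::euclidean_space measure)"
proof -
  interpret F: finite_measure "sphere_measure :: 'a measure" by (rule finite_measure_sphere)
  show ?thesis ..
qed

lemma scales_sphere_uminus: "scales (sphere_measure :: 'a::euclidean_space measure) uminus 1"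
proof (rule scalesI)
  have "(uminus :: 'a \<Rightarrow> 'a) \<in> measurable (restrict_space borel (sphere 0 1)) (restrict_space borel (sphere 0 1))"
    by (rule measurable_restrict_space3) auto
  then show "(uminus :: 'a \<Rightarrow> 'a) \<in> measurable sphere_measure sphere_measure"
    by (simp cong: measurable_cong_sets)
  fix g :: "'a \<Rightarrow> ennreal" assume g: "g \<in> borel_measurable sphere_measure"
  have gm: "(\<lambda>x. g (- x)) \<in> borel_measurable sphere_measure"
    using g \<open>uminus \<in> measurable sphere_measure sphere_measure\<close> by (metis measurable_compose)
  define D where "D = cball (0::'a) 1 - {0}"
  define G where "G y = g (nrm y) * indicator D y" for y
  have g': "g \<in> borel_measurable (restrict_space borel (sphere (0::'a) 1))"
    using g by (simp cong: measurable_cong_sets)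
  have "(\<lambda>y. g (nrm y)) \<in> borel_measurable (restrict_space lborel D)"
    unfolding D_def using nrm_meas g' by (rule measurable_compose)
  then have Gm: "G \<in> borel_measurable borel"
    unfolding G_def D_def
    by (subst (asm) borel_measurable_restrict_space_iff_ennreal) auto
  have neg: "G (- y) = g (- nrm y) * indicator D y" for y
    unfolding G_def D_def by (simp add: nrm_def indicator_def)
  have "(\<integral>\<^sup>+x. g (- x) \<partial>sphere_measure) = of_nat DIM('a) * (\<integral>\<^sup>+y. g (- nrm y) * indicator D y \<partial>lborel)"
    unfolding D_def by (rule nn_integral_sphere[OF gm])
  also have "(\<integral>\<^sup>+y. g (- nrm y) * indicator D y \<partial>lborel) = (\<integral>\<^sup>+y. G (- y) \<partial>lborel)"
    by (rule nn_integral_cong) (simp only: neg)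
  also have "\<dots> = (\<integral>\<^sup>+y. G y \<partial>lborel)"
    using scalesD(2)[OF scales_lborel_affine[of "-1" 0], of G] Gm by simp
  also have "of_nat DIM('a) * (\<integral>\<^sup>+y. G y \<partial>lborel) = (\<integral>\<^sup>+x. g x \<partial>sphere_measure)"
    unfolding G_def D_def by (rule nn_integral_sphere[OF g, symmetric])
  finally show "(\<integral>\<^sup>+x. g (- x) \<partial>sphere_measure) = 1 * (\<integral>\<^sup>+x. g x \<partial>sphere_measure)" by simp
qed


abbreviation M3 :: "('a::euclidean_space \<times> 'a \<times> 'a) measure" where
  "M3 \<equiv> lborel \<Otimes>\<^sub>M lborel \<Otimes>\<^sub>M sphere_measure"

lemma sphere_id_borel[measurable]: "(\<lambda>x. x) \<in> measurable (sphere_measure :: 'a::euclidean_space measure) borel"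
  by (simp cong: measurable_cong_sets add: measurable_restrict_space1)

lemma sfY: "sigma_finite_measure (lborel \<Otimes>\<^sub>M (sphere_measure :: 'a::euclidean_space measure))"
  by (intro sigma_finite_pair_measure sigma_finite_lborel sigma_finite_sphere)

lemma sfM3: "sigma_finite_measure (M3 :: ('a::euclidean_space \<times> 'a \<times> 'a) measure)"
  by (intro sigma_finite_pair_measure sigma_finite_lborel sfY)

lemma scales_M3_2nd:
  fixes G :: "'a::euclidean_space \<Rightarrow> 'a \<Rightarrow> 'a \<Rightarrow> 'a"
  assumes meas: "(\<lambda>z::'a \<times> 'a \<times> 'a. G (fst z) (snd (snd z)) (fst (snd z))) \<in> borel_measurable M3"
    and sc: "\<And>w \<Omega>. norm \<Omega> = 1 \<Longrightarrow> scales lborel (G w \<Omega>) c"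
  shows "scales M3 (\<lambda>z. (fst z, G (fst z) (snd (snd z)) (fst (snd z)), snd (snd z))) c"
proof -
  define F where "F w = (\<lambda>y::'a \<times> 'a. (G w (snd y) (fst y), snd y))" for w
  have "scales M3 (\<lambda>z. (fst z, F (fst z) (snd z))) c"
  proof (rule scales_fib2[OF sfY])
    show "(\<lambda>z. F (fst z) (snd z)) \<in> measurable M3 (lborel \<Otimes>\<^sub>M sphere_measure)"
      unfolding F_def using meas by (intro measurable_Pair) auto
    fix w :: 'a
    have m2: "(\<lambda>y. G w (snd y) (fst y)) \<in> borel_measurable (lborel \<Otimes>\<^sub>M sphere_measure)"
      using measurable_Pair2[OF meas, of w] by simp
    show "scales (lborel \<Otimes>\<^sub>M sphere_measure) (F w) c"
    proof -
      have "scales (lborel \<Otimes>\<^sub>M sphere_measure) (\<lambda>y. (G w (snd y) (fst y), snd y)) c"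
        by (rule scales_fib1[OF sigma_finite_lborel sigma_finite_sphere])
           (use m2 sc in auto)
      then show ?thesis unfolding F_def by simp
    qed
  qed
  then show ?thesis unfolding F_def by simp
qed

lemma scales_M3_1st:
  fixes G :: "'a \<times> 'a \<Rightarrow> 'a \<Rightarrow> 'a::euclidean_space"
  assumes meas: "(\<lambda>z::'a \<times> 'a \<times> 'a. G (snd z) (fst z)) \<in> borel_measurable M3"
    and sc: "\<And>y. scales lborel (G y) c"
  shows "scales M3 (\<lambda>z. (G (snd z) (fst z), snd z)) c"
  by (rule scales_fib1[OF sigma_finite_lborel sfY]) (use meas sc in auto)

lemma scales_M3_neg:
  "scales (M3 :: ('a::euclidean_space \<times> 'a \<times> 'a) measure) (\<lambda>z. (fst z, fst (snd z), - snd (snd z))) 1"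
proof -
  have Y: "scales (lborel \<Otimes>\<^sub>M (sphere_measure :: 'a measure)) (\<lambda>y. (fst y, (\<lambda>v1. uminus) (fst y) (snd y))) 1"
    by (rule scales_fib2[OF sigma_finite_sphere]) (use measurable_compose[OF measurable_snd scalesD(1)[OF scales_sphere_uminus]] scales_sphere_uminus in auto)
  have "scales (M3 :: ('a \<times> 'a \<times> 'a) measure) (\<lambda>z. (fst z, (\<lambda>w y. (fst y, - snd y)) (fst z) (snd z))) 1"
    by (rule scales_fib2[OF sfY])
       (use measurable_compose[OF measurable_snd[of lborel "lborel \<Otimes>\<^sub>M sphere_measure"] scalesD(1)[OF Y]] Y in simp_all)
  then show ?thesis by simp
qed


definition Phi :: "nat \<Rightarrow> nat \<Rightarrow> nat \<Rightarrow> 'a \<times> 'a \<times> 'a \<Rightarrow> 'a::euclidean_space \<times> 'a \<times> 'a" where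
  "Phi p q r z = (coll_v p q r (fst z) (fst (snd z)) (snd (snd z)),
                  coll_v1 p q r (fst z) (fst (snd z)) (snd (snd z)), - snd (snd z))"

definition kf :: "nat \<Rightarrow> nat \<Rightarrow> nat \<Rightarrow> real" where
  "kf p q r = sqrt (real p * real q / (real r * real (p + q - r)))"

lemma coll_scalars:
  assumes "1 \<le> p" "1 \<le> q" "1 \<le> r" "r < p + q"
  shows "real (p + q - r) / real (p + q) * kf p q r
           = sqrt (real p * real q) / real (p + q) * sqrt (real (p + q - r) / real r)"
    and "(real (p + q - r) / real (p + q) - 1) * kf p q r
           = - (sqrt (real p * real q) / real (p + q) * sqrt (real r / real (p + q - r)))"
    and "kf p q r > 0"
proof -
  define s where "s = real (p + q - r)"
  define M where "M = real (p + q)"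
  have s: "s > 0" "s = M - real r" unfolding s_def M_def using assms by auto
  have M: "M > 0" "M = real p + real q" unfolding M_def using assms by auto
  have r: "real r > 0" using assms by auto
  have pq: "real p * real q > 0" using assms by auto
  define X where "X = real p * real q / (real r * s)"
  have X: "X > 0" unfolding X_def using s r pq by auto
  have k: "kf p q r = sqrt X" unfolding kf_def X_def s_def ..
  show "kf p q r > 0" using k X by simp
  have e1: "s * sqrt X = sqrt (real p * real q) * sqrt (s / real r)"
  proof (rule power2_eq_imp_eq)
    show "(s * sqrt X)\<^sup>2 = (sqrt (real p * real q) * sqrt (s / real r))\<^sup>2"
      using X s r pq unfolding X_def by (simp add: power_mult_distrib field_simps power2_eq_square)
  qed (use X s r pq in auto)
  have e2: "real r * sqrt X = sqrt (real p * real q) * sqrt (real r / s)"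
  proof (rule power2_eq_imp_eq)
    show "(real r * sqrt X)\<^sup>2 = (sqrt (real p * real q) * sqrt (real r / s))\<^sup>2"
      using X s r pq unfolding X_def by (simp add: power_mult_distrib field_simps power2_eq_square)
  qed (use X s r pq in auto)
  have d1: "s / M * sqrt X = (s * sqrt X) / M" by simp
  have d2: "sqrt (real p * real q) / M * sqrt (s / real r) = (sqrt (real p * real q) * sqrt (s / real r)) / M"
    by simp
  show "real (p + q - r) / real (p + q) * kf p q r
           = sqrt (real p * real q) / real (p + q) * sqrt (real (p + q - r) / real r)"
    unfolding s_def[symmetric] M_def[symmetric] k d1 d2 e1 ..
  have "s / M - 1 = - (real r / M)" unfolding s(2) using M(1) by (simp add: diff_divide_distrib)
  then have d3: "(s / M - 1) * sqrt X = - ((real r * sqrt X) / M)" by simp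
  have d4: "sqrt (real p * real q) / M * sqrt (real r / s) = (sqrt (real p * real q) * sqrt (real r / s)) / M"
    by simp
  show "(real (p + q - r) / real (p + q) - 1) * kf p q r
           = - (sqrt (real p * real q) / real (p + q) * sqrt (real r / real (p + q - r)))"
    unfolding s_def[symmetric] M_def[symmetric] k d3 d4 e2 ..
qed

lemma scales_Phi:
  assumes "1 \<le> p" "1 \<le> q" "1 \<le> r" "r < p + q"
  shows "scales (M3 :: ('a::euclidean_space \<times> 'a \<times> 'a) measure) (Phi p q r)
           (ennreal (1 / kf p q r ^ DIM('a)))"
proof -
  define k where "k = kf p q r"
  have k: "k > 0" unfolding k_def using coll_scalars(3)[OF assms] .
  define a1 where "a1 = - (real q / real (p + q))"
  define a2 where "a2 = real (p + q - r) / real (p + q)"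
  have S1: "scales (M3 :: ('a \<times> 'a \<times> 'a) measure)
      (\<lambda>z. (fst z, (\<lambda>w \<Omega> w1. w + (-1) *\<^sub>R w1) (fst z) (snd (snd z)) (fst (snd z)), snd (snd z))) 1"
    by (rule scales_M3_2nd) (use scales_lborel_affine[of "-1"] in auto)
  have S2: "scales (M3 :: ('a \<times> 'a \<times> 'a) measure)
      (\<lambda>z. ((\<lambda>y w. a1 *\<^sub>R fst y + 1 *\<^sub>R w) (snd z) (fst z), snd z)) 1"
    by (rule scales_M3_1st) (use scales_lborel_affine[of 1] in auto)
  have S3: "scales (M3 :: ('a \<times> 'a \<times> 'a) measure)
      (\<lambda>z. (fst z, (\<lambda>w \<Omega> u. k *\<^sub>R (u - (2 * (u \<bullet> \<Omega>)) *\<^sub>R \<Omega>)) (fst z) (snd (snd z)) (fst (snd z)), snd (snd z)))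
      (ennreal (1 / k ^ DIM('a)))"
    by (rule scales_M3_2nd) (use scales_lborel_kreflect[OF _ k] in auto)
  have S4: "scales (M3 :: ('a \<times> 'a \<times> 'a) measure)
      (\<lambda>z. ((\<lambda>y w. a2 *\<^sub>R fst y + 1 *\<^sub>R w) (snd z) (fst z), snd z)) 1"
    by (rule scales_M3_1st) (use scales_lborel_affine[of 1] in auto)
  have S5: "scales (M3 :: ('a \<times> 'a \<times> 'a) measure)
      (\<lambda>z. (fst z, (\<lambda>w \<Omega> w1. w + (-1) *\<^sub>R w1) (fst z) (snd (snd z)) (fst (snd z)), snd (snd z))) 1"
    by (rule scales_M3_2nd) (use scales_lborel_affine[of "-1"] in auto)
  note S = scales_comp[OF scales_comp[OF scales_comp[OF scales_comp[OF scales_comp[OF S1 S2] S3] S4] S5] scales_M3_neg]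
  show ?thesis
  proof (rule scales_cong[OF S])
    fix z :: "'a \<times> 'a \<times> 'a"
    obtain w w1 \<Omega> where z: "z = (w, w1, \<Omega>)" by (cases z) auto
    define Ru where "Ru = w - w1 - (2 * ((w - w1) \<bullet> \<Omega>)) *\<^sub>R \<Omega>"
    define c0 where "c0 = a1 *\<^sub>R (w - w1) + w"
    have c0: "c0 = (1 / real (p + q)) *\<^sub>R (real p *\<^sub>R w + real q *\<^sub>R w1)"
    proof -
      have Mpos: "real (p + q) > 0" using assms by simp
      have Ma: "real (p + q) * a1 = - real q" unfolding a1_def using Mpos by simp
      have "real (p + q) *\<^sub>R c0 = real p *\<^sub>R w + real q *\<^sub>R w1"
        unfolding c0_def scaleR_add_right scaleR_scaleR Ma by (simp add: algebra_simps)
      then have "(1 / real (p + q)) *\<^sub>R (real (p + q) *\<^sub>R c0) = (1 / real (p + q)) *\<^sub>R (real p *\<^sub>R w + real q *\<^sub>R w1)"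
        by simp
      then show ?thesis using Mpos by simp
    qed
    have v: "a2 *\<^sub>R (k *\<^sub>R Ru) + c0 = coll_v p q r w w1 \<Omega>"
      unfolding coll_v_def c0[symmetric] Ru_def[symmetric] scaleR_scaleR a2_def k_def
        coll_scalars(1)[OF assms] by (simp add: add.commute)
    have v1: "a2 *\<^sub>R (k *\<^sub>R Ru) + c0 + (-1) *\<^sub>R (k *\<^sub>R Ru) = coll_v1 p q r w w1 \<Omega>"
    proof -
      have "a2 *\<^sub>R (k *\<^sub>R Ru) + c0 + (-1) *\<^sub>R (k *\<^sub>R Ru) = c0 + ((a2 - 1) * k) *\<^sub>R Ru"
        by (simp add: algebra_simps)
      also have "(a2 - 1) * k = - (sqrt (real p * real q) / real (p + q) * sqrt (real r / real (p + q - r)))"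
        unfolding a2_def k_def by (rule coll_scalars(2)[OF assms])
      finally show ?thesis unfolding coll_v1_def c0[symmetric] Ru_def[symmetric] by simp
    qed
    show "(\<lambda>z. (fst z, fst (snd z), - snd (snd z)))
      ((\<lambda>z. (fst z, (\<lambda>w \<Omega> w1. w + (-1) *\<^sub>R w1) (fst z) (snd (snd z)) (fst (snd z)), snd (snd z)))
        ((\<lambda>z. ((\<lambda>y w. a2 *\<^sub>R fst y + 1 *\<^sub>R w) (snd z) (fst z), snd z))
          ((\<lambda>z. (fst z, (\<lambda>w \<Omega> u. k *\<^sub>R (u - (2 * (u \<bullet> \<Omega>)) *\<^sub>R \<Omega>)) (fst z) (snd (snd z)) (fst (snd z)), snd (snd z)))
            ((\<lambda>z. ((\<lambda>y w. a1 *\<^sub>R fst y + 1 *\<^sub>R w) (snd z) (fst z), snd z))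
              ((\<lambda>z. (fst z, (\<lambda>w \<Omega> w1. w + (-1) *\<^sub>R w1) (fst z) (snd (snd z)) (fst (snd z)), snd (snd z))) z)))))
      = Phi p q r z"
      unfolding z Phi_def using v v1 unfolding Ru_def c0_def by simp
  qed (simp add: k_def)
qed


definition cen :: "nat \<Rightarrow> nat \<Rightarrow> 'a \<Rightarrow> 'a \<Rightarrow> 'a::euclidean_space" where
  "cen p q w w1 = (1 / real (p + q)) *\<^sub>R (real p *\<^sub>R w + real q *\<^sub>R w1)"

definition refl :: "'a \<Rightarrow> 'a \<Rightarrow> 'a::euclidean_space" where
  "refl u \<Omega> = u - (2 * (u \<bullet> \<Omega>)) *\<^sub>R \<Omega>"

lemma refl_neg[simp]: "refl u (- \<Omega>) = refl u \<Omega>"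
  by (simp add: refl_def)

lemma refl_scale: "refl (c *\<^sub>R u) \<Omega> = c *\<^sub>R refl u \<Omega>"
  by (simp add: refl_def algebra_simps)

lemma refl_inner: "norm \<Omega> = 1 \<Longrightarrow> refl u \<Omega> \<bullet> \<Omega> = - (u \<bullet> \<Omega>)"
  by (simp add: refl_def inner_diff_left dot_square_norm)

lemma refl_refl: "norm \<Omega> = 1 \<Longrightarrow> refl (refl u \<Omega>) \<Omega> = u"
  using refl_inner[of \<Omega> u] by (simp add: refl_def[of "refl u \<Omega>"]) (simp add: refl_def)

lemma refl_norm: "norm \<Omega> = 1 \<Longrightarrow> norm (refl u \<Omega>) = norm u"
proof -
  assume n: "norm \<Omega> = 1"
  have e: "\<Omega> \<bullet> \<Omega> = 1" using n by (simp add: dot_square_norm)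
  have "refl u \<Omega> \<bullet> refl u \<Omega> = u \<bullet> u"
    unfolding refl_def by (simp add: inner_diff_left inner_diff_right inner_commute e algebra_simps del: dot_square_norm)
  then show ?thesis by (simp add: norm_eq_sqrt_inner del: dot_square_norm)
qed

lemma coll_rep:
  assumes "1 \<le> p" "1 \<le> q" "1 \<le> r" "r < p + q"
  shows "coll_v p q r w w1 \<Omega> = cen p q w w1 + (real (p + q - r) / real (p + q) * kf p q r) *\<^sub>R refl (w - w1) \<Omega>"
    and "coll_v1 p q r w w1 \<Omega> = cen p q w w1 - (real r / real (p + q) * kf p q r) *\<^sub>R refl (w - w1) \<Omega>"
proof -
  show "coll_v p q r w w1 \<Omega> = cen p q w w1 + (real (p + q - r) / real (p + q) * kf p q r) *\<^sub>R refl (w - w1) \<Omega>"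
    unfolding coll_v_def cen_def refl_def coll_scalars(1)[OF assms] ..
  have M: "real (p + q) > 0" using assms by simp
  have eq: "real (p + q - r) / real (p + q) - 1 = - (real r / real (p + q))"
    using assms M by (simp add: of_nat_diff field_simps)
  have "(- (real r / real (p + q))) * kf p q r = - (sqrt (real p * real q) / real (p + q) * sqrt (real r / real (p + q - r)))"
    using coll_scalars(2)[OF assms] unfolding eq .
  then have "sqrt (real p * real q) / real (p + q) * sqrt (real r / real (p + q - r)) = real r / real (p + q) * kf p q r"
    by (metis mult_minus_left neg_equal_iff_equal)
  then show "coll_v1 p q r w w1 \<Omega> = cen p q w w1 - (real r / real (p + q) * kf p q r) *\<^sub>R refl (w - w1) \<Omega>"
    unfolding coll_v1_def cen_def refl_def by simp
qed

lemma coll_diff: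
  assumes "1 \<le> p" "1 \<le> q" "1 \<le> r" "r < p + q"
  shows "coll_v p q r w w1 \<Omega> - coll_v1 p q r w w1 \<Omega> = kf p q r *\<^sub>R refl (w - w1) \<Omega>"
proof -
  have M: "real (p + q) > 0" using assms by simp
  have ab: "real (p + q - r) + real r = real (p + q)"
    using assms by (simp add: of_nat_diff)
  have "real (p + q - r) / real (p + q) * kf p q r + real r / real (p + q) * kf p q r
      = (real (p + q - r) + real r) / real (p + q) * kf p q r"
    by (simp add: add_divide_distrib distrib_right)
  also have "\<dots> = kf p q r" unfolding ab using M by simp
  finally have "real (p + q - r) / real (p + q) * kf p q r + real r / real (p + q) * kf p q r = kf p q r" .
  moreover have "cen p q w w1 + (real (p + q - r) / real (p + q) * kf p q r) *\<^sub>R refl (w - w1) \<Omega>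
      - (cen p q w w1 - (real r / real (p + q) * kf p q r) *\<^sub>R refl (w - w1) \<Omega>)
      = (real (p + q - r) / real (p + q) * kf p q r + real r / real (p + q) * kf p q r) *\<^sub>R refl (w - w1) \<Omega>"
    by (simp add: scaleR_add_left)
  ultimately show ?thesis unfolding coll_rep[OF assms] by simp
qed

lemma coll_cen:
  assumes "1 \<le> p" "1 \<le> q" "1 \<le> r" "r < p + q"
  shows "cen r (p + q - r) (coll_v p q r w w1 \<Omega>) (coll_v1 p q r w w1 \<Omega>) = cen p q w w1"
proof -
  define s where "s = p + q - r"
  have rs: "r + s = p + q" unfolding s_def using assms by simp
  have M: "real (p + q) > 0" using assms by simp
  define X where "X = refl (w - w1) \<Omega>"
  define c where "c = cen p q w w1"
  have "real r * (real s / real (p + q) * kf p q r) - real s * (real r / real (p + q) * kf p q r) = 0"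
    by simp
  then have "real r *\<^sub>R (c + (real s / real (p + q) * kf p q r) *\<^sub>R X) + real s *\<^sub>R (c - (real r / real (p + q) * kf p q r) *\<^sub>R X)
      = (real r + real s) *\<^sub>R c"
    by (simp add: algebra_simps scaleR_add_left[symmetric] del: scaleR_add_left)
  then show ?thesis
    unfolding s_def[symmetric] coll_rep[OF assms] X_def[symmetric] c_def[symmetric] s_def[symmetric]
    using rs M assms unfolding cen_def[of r s]
    by (simp add: of_nat_add[symmetric] del: of_nat_add)
qed


lemma valid_rev:
  fixes p q r :: nat
  assumes "1 \<le> p" "1 \<le> q" "1 \<le> r" "r < p + q"
  shows "1 \<le> r" "1 \<le> p + q - r" "1 \<le> p" "p < r + (p + q - r)" "r + (p + q - r) - p = q"
    "r + (p + q - r) = p + q"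
  using assms by auto

lemma kf_inv:
  assumes "1 \<le> p" "1 \<le> q" "1 \<le> r" "r < p + q"
  shows "kf r (p + q - r) p * kf p q r = 1"
proof -
  have e: "r + (p + q - r) - p = q" using assms by auto
  define a where "a = real r * real (p + q - r)"
  define b where "b = real p * real q"
  have pos: "a > 0" "b > 0" unfolding a_def b_def using assms by auto
  have "kf r (p + q - r) p * kf p q r = sqrt (a / b * (b / a))"
    unfolding kf_def e a_def b_def real_sqrt_mult ..
  also have "a / b * (b / a) = 1" using pos by simp
  finally show ?thesis by simp
qed

lemma coll_inv:
  assumes v: "1 \<le> p" "1 \<le> q" "1 \<le> r" "r < p + q" and n: "norm \<Omega> = 1"
  shows "coll_v r (p + q - r) p (coll_v p q r w w1 \<Omega>) (coll_v1 p q r w w1 \<Omega>) (- \<Omega>) = w"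
    and "coll_v1 r (p + q - r) p (coll_v p q r w w1 \<Omega>) (coll_v1 p q r w w1 \<Omega>) (- \<Omega>) = w1"
proof -
  note vr = valid_rev[OF v]
  define s where "s = p + q - r"
  define vv where "vv = coll_v p q r w w1 \<Omega>"
  define vv1 where "vv1 = coll_v1 p q r w w1 \<Omega>"
  have M: "real (p + q) > 0" using v by simp
  have dif: "refl (vv - vv1) (- \<Omega>) = kf p q r *\<^sub>R (w - w1)"
    unfolding vv_def vv1_def coll_diff[OF v] refl_neg refl_scale refl_refl[OF n] ..
  have ce: "cen r s vv vv1 = cen p q w w1" unfolding vv_def vv1_def s_def by (rule coll_cen[OF v])
  have kk: "kf r s p * kf p q r = 1" unfolding s_def by (rule kf_inv[OF v])
  have Mc: "real (p + q) *\<^sub>R cen p q w w1 = real p *\<^sub>R w + real q *\<^sub>R w1"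
    unfolding cen_def using M by simp
  have rs: "r + s - p = q" "r + s = p + q" unfolding s_def using vr by auto
  have "coll_v r s p vv vv1 (- \<Omega>) = cen p q w w1 + (real q / real (p + q)) *\<^sub>R (w - w1)"
    unfolding coll_rep(1)[OF vr(1-4)[folded s_def]] ce dif rs scaleR_scaleR
    using kk by (simp add: mult.assoc)
  also have "\<dots> = w"
  proof -
    have Mq: "real (p + q) * (real q / real (p + q)) = real q" using M by simp
    have "real (p + q) *\<^sub>R (cen p q w w1 + (real q / real (p + q)) *\<^sub>R (w - w1)) = real (p + q) *\<^sub>R w"
      unfolding scaleR_add_right Mc scaleR_scaleR Mq by (simp add: algebra_simps)
    then show ?thesis using M by simp
  qed
  finally show "coll_v r (p + q - r) p (coll_v p q r w w1 \<Omega>) (coll_v1 p q r w w1 \<Omega>) (- \<Omega>) = w"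
    unfolding s_def vv_def vv1_def .
  have "coll_v1 r s p vv vv1 (- \<Omega>) = cen p q w w1 - (real p / real (p + q)) *\<^sub>R (w - w1)"
    unfolding coll_rep(2)[OF vr(1-4)[folded s_def]] ce dif rs scaleR_scaleR
    using kk by (simp add: mult.assoc)
  also have "\<dots> = w1"
  proof -
    have Mp: "real (p + q) * (real p / real (p + q)) = real p" using M by simp
    have "real (p + q) *\<^sub>R (cen p q w w1 - (real p / real (p + q)) *\<^sub>R (w - w1)) = real (p + q) *\<^sub>R w1"
      unfolding scaleR_diff_right Mc scaleR_scaleR Mp by (simp add: algebra_simps)
    then show ?thesis using M by simp
  qed
  finally show "coll_v1 r (p + q - r) p (coll_v p q r w w1 \<Omega>) (coll_v1 p q r w w1 \<Omega>) (- \<Omega>) = w1"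
    unfolding s_def vv_def vv1_def .
qed

lemma coll_pre:
  assumes v: "1 \<le> p" "1 \<le> q" "1 \<le> r" "r < p + q" and n: "norm \<Omega> = 1"
  shows "(coll_v p q r w w1 \<Omega> - coll_v1 p q r w w1 \<Omega>) \<bullet> (- \<Omega>) = kf p q r * ((w - w1) \<bullet> \<Omega>)"
  unfolding coll_diff[OF v] using refl_inner[OF n, of "w - w1"] by simp

lemma coll_cross:
  assumes v: "1 \<le> p" "1 \<le> q" "1 \<le> r" "r < p + q" and n: "norm \<Omega> = 1"
  shows "cross_B B r (p + q - r) (coll_v p q r w w1 \<Omega>) (coll_v1 p q r w w1 \<Omega>) (- \<Omega>) = cross_B B p q w w1 \<Omega>"
proof -
  define k where "k = kf p q r"
  have k: "k > 0" unfolding k_def by (rule coll_scalars(3)[OF v])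
  define u where "u = w - w1"
  have d: "coll_v p q r w w1 \<Omega> - coll_v1 p q r w w1 \<Omega> = k *\<^sub>R refl u \<Omega>"
    unfolding k_def u_def by (rule coll_diff[OF v])
  have nd: "norm (k *\<^sub>R refl u \<Omega>) = k * norm u" using k refl_norm[OF n] by simp
  have rs: "r + (p + q - r) = p + q" using v by simp
  have pos: "real p > 0" "real q > 0" "real r > 0" "real (p + q - r) > 0" using v by auto
  have k2: "k\<^sup>2 = real p * real q / (real r * real (p + q - r))"
    unfolding k_def kf_def using pos by simp
  have rk: "real r * real (p + q - r) * k\<^sup>2 = real p * real q"
    unfolding k2 using pos by simp
  have E: "real r * real (p + q - r) / real (p + q) * (k * norm u)\<^sup>2 = real p * real q / real (p + q) * (norm u)\<^sup>2"
    unfolding rk[symmetric] by (simp add: power_mult_distrib)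
  have C: "(- \<Omega>) \<bullet> ((k *\<^sub>R refl u \<Omega>) /\<^sub>R (k * norm u)) = \<Omega> \<bullet> (u /\<^sub>R norm u)"
  proof -
    have "(k *\<^sub>R refl u \<Omega>) /\<^sub>R (k * norm u) = (1 / norm u) *\<^sub>R refl u \<Omega>"
      using k by (simp add: field_simps)
    then show ?thesis using refl_inner[OF n, of u] k by (simp add: inner_commute)
  qed
  show ?thesis
    unfolding cross_B_def d u_def[symmetric] nd rs E C ..
qed


lemma scales_lborel_minus: "scales lborel (\<lambda>u::'a::euclidean_space. u - t) 1"
  by (rule scales_cong[OF scales_lborel_affine[of 1 "- t"]]) auto

lemma scales_lborel_uminus: "scales lborel (uminus :: 'a::euclidean_space \<Rightarrow> 'a) 1"
  by (rule scales_cong[OF scales_lborel_affine[of "-1" 0]]) auto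

lemma scales_swap:
  "scales (M3 :: ('a::euclidean_space \<times> 'a \<times> 'a) measure) (\<lambda>z. (fst (snd z), fst z, - snd (snd z))) 1"
proof -
  have T1: "scales (M3 :: ('a \<times> 'a \<times> 'a) measure) (\<lambda>z. ((\<lambda>y x. fst y + 1 *\<^sub>R x) (snd z) (fst z), snd z)) 1"
    by (rule scales_M3_1st) (use scales_lborel_affine[of 1] in auto)
  have T2: "scales (M3 :: ('a \<times> 'a \<times> 'a) measure)
      (\<lambda>z. (fst z, (\<lambda>a \<Omega> y. y - a) (fst z) (snd (snd z)) (fst (snd z)), snd (snd z))) 1"
    by (rule scales_M3_2nd) (use scales_lborel_minus in auto)
  have T4: "scales (M3 :: ('a \<times> 'a \<times> 'a) measure)
      (\<lambda>z. (fst z, (\<lambda>a \<Omega> y. - y) (fst z) (snd (snd z)) (fst (snd z)), snd (snd z))) 1"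
    by (rule scales_M3_2nd) (use scales_lborel_uminus in auto)
  note T = scales_comp[OF scales_comp[OF scales_comp[OF scales_comp[OF T1 T2] T1] T4] scales_M3_neg]
  show ?thesis
    by (rule scales_cong[OF T]) auto
qed

lemma scales_distr:
  assumes sc: "scales M L c"
  shows "distr M M L = density M (\<lambda>_. c)"
proof (rule measure_eqI)
  show "sets (distr M M L) = sets (density M (\<lambda>_. c))" by simp
  fix A assume A: "A \<in> sets (distr M M L)"
  then have A': "A \<in> sets M" by simp
  have Lm: "L \<in> measurable M M" by (rule scalesD(1)[OF sc])
  have "emeasure (distr M M L) A = emeasure M (L -` A \<inter> space M)"
    by (rule emeasure_distr[OF Lm A'])
  also have "\<dots> = (\<integral>\<^sup>+x. indicator (L -` A \<inter> space M) x \<partial>M)"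
    using Lm A' by (simp add: measurable_sets)
  also have "\<dots> = (\<integral>\<^sup>+x. indicator A (L x) \<partial>M)"
    by (intro nn_integral_cong) (auto split: split_indicator)
  also have "\<dots> = c * (\<integral>\<^sup>+x. indicator A x \<partial>M)"
    by (rule scalesD(2)[OF sc]) (use A' in simp)
  also have "\<dots> = emeasure (density M (\<lambda>_. c)) A"
    using A' by (simp add: emeasure_density nn_integral_cmult_indicator)
  finally show "emeasure (distr M M L) A = emeasure (density M (\<lambda>_. c)) A" .
qed

lemma scales_integral:
  fixes f :: "'a \<Rightarrow> real"
  assumes sc: "scales M L (ennreal c)" and c: "c \<ge> 0" and f: "f \<in> borel_measurable M"
  shows "(\<integral>x. f (L x) \<partial>M) = c * (\<integral>x. f x \<partial>M)"
proof -
  have Lm: "L \<in> measurable M M" by (rule scalesD(1)[OF sc])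
  have "(\<integral>x. f (L x) \<partial>M) = integral\<^sup>L (distr M M L) f"
    by (rule integral_distr[OF Lm f, symmetric])
  also have "\<dots> = integral\<^sup>L (density M (\<lambda>_. ennreal c)) f"
    unfolding scales_distr[OF sc] ..
  also have "\<dots> = (\<integral>x. c *\<^sub>R f x \<partial>M)"
    by (rule integral_density) (use f c in auto)
  also have "\<dots> = c * (\<integral>x. f x \<partial>M)" by simp
  finally show ?thesis .
qed

lemma scales_nn_integral:
  fixes f :: "'a \<Rightarrow> ennreal"
  assumes "scales M L c" "f \<in> borel_measurable M"
  shows "(\<integral>\<^sup>+x. f (L x) \<partial>M) = c * (\<integral>\<^sup>+x. f x \<partial>M)"
  using scalesD(2)[OF assms(1) assms(2)] .


definition Kb :: "(real \<Rightarrow> real \<Rightarrow> real) \<Rightarrow> (nat \<Rightarrow> 'a::euclidean_space \<Rightarrow> real) \<Rightarrow> nat \<Rightarrow> nat \<Rightarrow> 'a \<times> 'a \<times> 'a \<Rightarrow> real" where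
  "Kb B f m m1 z = indicator precoll z * cross_B B m m1 (fst z) (fst (snd z)) (snd (snd z)) * f m (fst z) * f m1 (fst (snd z))"

lemma precoll_alt: "precoll = {z::'a::euclidean_space \<times> 'a \<times> 'a. (fst z - fst (snd z)) \<bullet> snd (snd z) \<le> 0}"
  unfolding precoll_def by auto

lemma precoll_ind[measurable]: "(\<lambda>z. indicator precoll z :: real) \<in> borel_measurable (M3 :: ('a::euclidean_space \<times> 'a \<times> 'a) measure)"
proof -
  have "{z \<in> space (M3 :: ('a \<times> 'a \<times> 'a) measure). (fst z - fst (snd z)) \<bullet> snd (snd z) \<le> 0} \<in> sets M3"
    by measurable
  moreover have "{z \<in> space (M3 :: ('a \<times> 'a \<times> 'a) measure). (fst z - fst (snd z)) \<bullet> snd (snd z) \<le> 0}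
     = {z \<in> space M3. z \<in> precoll}"
    unfolding precoll_alt by auto
  ultimately show ?thesis
    using borel_measurable_indicator'[of M3 "\<lambda>z. z" "\<lambda>_. precoll"] by simp
qed

lemma cross_nonneg:
  assumes B_nonneg: "\<forall>E c. 0 \<le> E \<longrightarrow> -1 \<le> c \<longrightarrow> c \<le> 1 \<longrightarrow> 0 \<le> B E c"
    and n: "norm \<Omega> = 1"
  shows "0 \<le> cross_B B m m1 v v1 \<Omega>"
proof -
  have "\<bar>\<Omega> \<bullet> ((v - v1) /\<^sub>R norm (v - v1))\<bar> \<le> norm \<Omega> * norm ((v - v1) /\<^sub>R norm (v - v1))"
    by (rule Cauchy_Schwarz_ineq2)
  also have "norm ((v - v1) /\<^sub>R norm (v - v1)) \<le> 1"
    by (cases "v = v1") auto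
  finally have "\<bar>\<Omega> \<bullet> ((v - v1) /\<^sub>R norm (v - v1))\<bar> \<le> 1" using n by simp
  then show ?thesis unfolding cross_B_def using B_nonneg by auto
qed

lemma cross_meas:
  assumes B_meas: "(\<lambda>(E, c). B E c) \<in> borel_measurable (restrict_space borel ({0..} \<times> {-1..1}))"
  shows "(\<lambda>z::'a::euclidean_space \<times> 'a \<times> 'a. cross_B B m m1 (fst z) (fst (snd z)) (snd (snd z))) \<in> borel_measurable M3"
proof -
  define E where "E z = real m * real m1 / real (m + m1) * (norm (fst z - fst (snd z)))\<^sup>2" for z :: "'a \<times> 'a \<times> 'a"
  define c where "c z = snd (snd z) \<bullet> ((fst z - fst (snd z)) /\<^sub>R norm (fst z - fst (snd z)))" for z :: "'a \<times> 'a \<times> 'a"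
  have "(\<lambda>z. (E z, c z)) \<in> measurable M3 (borel \<Otimes>\<^sub>M borel)"
    unfolding E_def c_def by measurable
  then have m1: "(\<lambda>z. (E z, c z)) \<in> measurable M3 borel" by (simp add: borel_prod)
  have "(\<lambda>z. (E z, c z)) \<in> space M3 \<rightarrow> {0..} \<times> {-1..1}"
  proof
    fix z :: "'a \<times> 'a \<times> 'a" assume "z \<in> space M3"
    then have n: "norm (snd (snd z)) = 1" by (auto simp: space_pair_measure)
    have "\<bar>c z\<bar> \<le> norm (snd (snd z)) * norm ((fst z - fst (snd z)) /\<^sub>R norm (fst z - fst (snd z)))"
      unfolding c_def by (rule Cauchy_Schwarz_ineq2)
    also have "norm ((fst z - fst (snd z)) /\<^sub>R norm (fst z - fst (snd z))) \<le> 1"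
      by (cases "fst z = fst (snd z)") auto
    finally have "\<bar>c z\<bar> \<le> 1" using n by simp
    moreover have "E z \<ge> 0" unfolding E_def by simp
    ultimately show "(E z, c z) \<in> {0..} \<times> {-1..1}" by auto
  qed
  then have "(\<lambda>z. (E z, c z)) \<in> measurable M3 (restrict_space borel ({0..} \<times> {-1..1}))"
    using m1 by (intro measurable_restrict_space2)
  from measurable_compose[OF this B_meas] show ?thesis
    unfolding cross_B_def E_def c_def by simp
qed


definition Iw :: "((nat \<times> nat) \<times> nat) set" where
  "Iw = Sigma ({1..} \<times> {1..}) (\<lambda>(m, m1). {1..m + m1 - 1})"

definition Jg :: "nat \<Rightarrow> (nat \<times> nat) set" where
  "Jg m = {(p, q). 1 \<le> p \<and> 1 \<le> q \<and> m + 1 \<le> p + q}"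

definition Jl :: "nat \<Rightarrow> (nat \<times> nat) set" where
  "Jl m = Sigma {1..} (\<lambda>m1. {1..m + m1 - 1})"

lemma nn_count_Sigma:
  "(\<integral>\<^sup>+z. h z \<partial>count_space (Sigma A B)) = (\<integral>\<^sup>+a. (\<integral>\<^sup>+b. h (a, b) \<partial>count_space (B a)) \<partial>count_space A)"
proof -
  have "(\<integral>\<^sup>+z. h z \<partial>count_space (Sigma A B)) = (\<integral>\<^sup>+z. h z * indicator (Sigma A B) z \<partial>count_space UNIV)"
    by (rule nn_integral_count_space_indicator) simp
  also have "\<dots> = (\<integral>\<^sup>+a. (\<integral>\<^sup>+b. h (a, b) * indicator (Sigma A B) (a, b) \<partial>count_space UNIV) \<partial>count_space UNIV)"
    by (rule nn_integral_fst_count_space[symmetric])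
  also have "\<dots> = (\<integral>\<^sup>+a. (\<integral>\<^sup>+b. h (a, b) \<partial>count_space (B a)) * indicator A a \<partial>count_space UNIV)"
  proof (rule nn_integral_cong)
    fix a
    show "(\<integral>\<^sup>+b. h (a, b) * indicator (Sigma A B) (a, b) \<partial>count_space UNIV) = (\<integral>\<^sup>+b. h (a, b) \<partial>count_space (B a)) * indicator A a"
    proof (cases "a \<in> A")
      case True
      then show ?thesis
        by (simp add: nn_integral_count_space_indicator indicator_def)
    next
      case False
      then show ?thesis by (simp add: indicator_def)
    qed
  qed
  also have "\<dots> = (\<integral>\<^sup>+a. (\<integral>\<^sup>+b. h (a, b) \<partial>count_space (B a)) \<partial>count_space A)"
    by (rule nn_integral_count_space_indicator[symmetric]) simp
  finally show ?thesis .
qed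

lemma NI_Iw:
  fixes h :: "nat \<Rightarrow> nat \<Rightarrow> nat \<Rightarrow> ennreal"
  shows "(\<integral>\<^sup>+i. h (fst (fst i)) (snd (fst i)) (snd i) \<partial>count_space Iw)
       = (\<integral>\<^sup>+m. (\<integral>\<^sup>+m1. (\<Sum>m'=1..m+m1-1. h m m1 m') \<partial>count_space {1..}) \<partial>count_space {1..})"
proof -
  have "(\<integral>\<^sup>+i. h (fst (fst i)) (snd (fst i)) (snd i) \<partial>count_space Iw)
      = (\<integral>\<^sup>+a. (\<integral>\<^sup>+b. h (fst a) (snd a) b \<partial>count_space ((\<lambda>(m, m1). {1..m + m1 - 1}) a)) \<partial>count_space ({1..} \<times> {1..}))"
    unfolding Iw_def using nn_count_Sigma[where h="\<lambda>i. h (fst (fst i)) (snd (fst i)) (snd i)"] by simp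
  also have "\<dots> = (\<integral>\<^sup>+a. (\<Sum>m'=1..fst a + snd a - 1. h (fst a) (snd a) m') \<partial>count_space ({1..} \<times> {1..}))"
    by (intro nn_integral_cong) (auto simp: nn_integral_count_space_finite split: prod.splits)
  also have "\<dots> = (\<integral>\<^sup>+m. (\<integral>\<^sup>+m1. (\<Sum>m'=1..m+m1-1. h m m1 m') \<partial>count_space {1..}) \<partial>count_space {1..})"
    using nn_count_Sigma[where h="\<lambda>a. \<Sum>m'=1..fst a + snd a - 1. h (fst a) (snd a) m'" and A="{1..}" and B="\<lambda>_. {1..}"]
    by simp
  finally show ?thesis .
qed

lemma bij_gain: "bij_betw (\<lambda>i. (snd i, fst i)) Iw (Sigma {1..} Jg)"
  by (rule bij_betwI[where g="\<lambda>x. (snd x, fst x)"]) (auto simp: Iw_def Jg_def)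

lemma bij_loss: "bij_betw (\<lambda>i. (fst (fst i), snd (fst i), snd i)) Iw (Sigma {1..} Jl)"
  by (rule bij_betwI[where g="\<lambda>x. ((fst x, fst (snd x)), snd (snd x))"]) (auto simp: Iw_def Jl_def)

lemma bij_swap: "bij_betw (\<lambda>i. ((snd (fst i), fst (fst i)), fst (fst i) + snd (fst i) - snd i)) Iw Iw"
  by (rule bij_betwI[where g="\<lambda>i. ((snd (fst i), fst (fst i)), fst (fst i) + snd (fst i) - snd i)"])
     (auto simp: Iw_def)

lemma countable_Jg: "countable (Jg m)"
  by (rule countable_subset[of _ UNIV]) auto

lemma countable_Jl: "countable (Jl m)"
  by (rule countable_subset[of _ UNIV]) auto

lemma nn_Sigma_reindex:
  fixes h :: "'i \<Rightarrow> ennreal"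
  assumes "bij_betw g I (Sigma A B)"
  shows "(\<integral>\<^sup>+a. (\<integral>\<^sup>+b. h' (a, b) \<partial>count_space (B a)) \<partial>count_space A) = (\<integral>\<^sup>+i. h' (g i) \<partial>count_space I)"
  by (simp add: nn_count_Sigma[symmetric] nn_integral_bij_count_space[OF assms])

lemma infsum_Sigma_reindex:
  fixes h' :: "_ \<Rightarrow> real"
  assumes g: "bij_betw g I (Sigma A B)" and s: "(\<lambda>i. h' (g i)) summable_on I"
  shows "(\<Sum>\<^sub>\<infinity>a\<in>A. \<Sum>\<^sub>\<infinity>b\<in>B a. h' (a, b)) = (\<Sum>\<^sub>\<infinity>i\<in>I. h' (g i))"
    and "(\<lambda>a. \<Sum>\<^sub>\<infinity>b\<in>B a. h' (a, b)) summable_on A"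
proof -
  have s': "h' summable_on Sigma A B"
    using s summable_on_reindex_bij_betw[OF g] by blast
  show "(\<Sum>\<^sub>\<infinity>a\<in>A. \<Sum>\<^sub>\<infinity>b\<in>B a. h' (a, b)) = (\<Sum>\<^sub>\<infinity>i\<in>I. h' (g i))"
    using infsum_Sigma_banach[OF s'] infsum_reindex_bij_betw[OF g, of h'] by simp
  show "(\<lambda>a. \<Sum>\<^sub>\<infinity>b\<in>B a. h' (a, b)) summable_on A"
  proof -
    have s'': "(\<lambda>(x, y). h' (x, y)) summable_on Sigma A B" using s' by simp
    show ?thesis using summable_on_Sigma_banach[OF s''] by simp
  qed
qed


lemma abs_integral_le_nn:
  fixes g :: "'a \<Rightarrow> real"
  shows "ennreal \<bar>\<integral>x. g x \<partial>M\<bar> \<le> (\<integral>\<^sup>+x. ennreal \<bar>g x\<bar> \<partial>M)"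
proof (cases "integrable M g")
  case True
  then show ?thesis using integral_norm_bound_ennreal[OF True] by simp
next
  case False
  then show ?thesis by (simp add: not_integrable_integral_eq)
qed

lemma coll_v_meas[measurable]:
  "(\<lambda>z::'a::euclidean_space \<times> 'a \<times> 'a. coll_v a b c (fst z) (fst (snd z)) (snd (snd z))) \<in> borel_measurable M3"
  unfolding coll_v_def by measurable

lemma coll_v1_meas[measurable]:
  "(\<lambda>z::'a::euclidean_space \<times> 'a \<times> 'a. coll_v1 a b c (fst z) (fst (snd z)) (snd (snd z))) \<in> borel_measurable M3"
  unfolding coll_v1_def by measurable

locale bme =
  fixes A :: "nat \<Rightarrow> nat \<Rightarrow> nat \<Rightarrow> real"
    and B :: "real \<Rightarrow> real \<Rightarrow> real"
    and f \<phi> :: "nat \<Rightarrow> 'a::euclidean_space \<Rightarrow> real"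
    and C :: real
  assumes A_nonneg: "\<forall>m m1 m'. 1 \<le> m \<longrightarrow> 1 \<le> m1 \<longrightarrow> 1 \<le> m' \<longrightarrow> m' < m + m1 \<longrightarrow> 0 \<le> A m m1 m'"
    and A_sym: "\<forall>m m1 m'. 1 \<le> m \<longrightarrow> 1 \<le> m1 \<longrightarrow> 1 \<le> m' \<longrightarrow> m' < m + m1 \<longrightarrow>
                   A m m1 m' = A m1 m m' \<and> A m m1 m' = A m m1 (m + m1 - m')"
    and B_nonneg: "\<forall>E c. 0 \<le> E \<longrightarrow> -1 \<le> c \<longrightarrow> c \<le> 1 \<longrightarrow> 0 \<le> B E c"
    and B_meas: "(\<lambda>(E, c). B E c) \<in> borel_measurable (restrict_space borel ({0..} \<times> {-1..1}))"
    and f_meas: "\<forall>m. f m \<in> borel_measurable lborel"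
    and f_decay: "(\<integral>\<^sup>+m. (\<integral>\<^sup>+m1. (\<Sum>m'=1..m+m1-1. ennreal (A m m1 m') *
                   nn_integral (lborel \<Otimes>\<^sub>M lborel \<Otimes>\<^sub>M sphere_measure)
                     (\<lambda>(v, v1, \<Omega>). ennreal (indicator precoll (v, v1, \<Omega>) * cross_B B m m1 v v1 \<Omega>
                                          * \<bar>f m v\<bar> * \<bar>f m1 v1\<bar>)))
                 \<partial>count_space {1..}) \<partial>count_space {1..}) < \<infinity>"
    and phi_meas: "\<forall>m. \<phi> m \<in> borel_measurable lborel"
    and phi_bdd: "\<forall>m v. \<bar>\<phi> m v\<bar> \<le> C"

context bme
begin

lemma fm[measurable]: "f m \<in> borel_measurable borel"
  using f_meas by simp

lemma phim[measurable]: "\<phi> m \<in> borel_measurable borel"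
  using phi_meas by simp

lemma C_nonneg: "0 \<le> C"
  using phi_bdd by (meson abs_ge_zero order_trans)

lemma cross_measM3[measurable]:
  "(\<lambda>z::'a \<times> 'a \<times> 'a. cross_B B m m1 (fst z) (fst (snd z)) (snd (snd z))) \<in> borel_measurable M3"
  by (rule cross_meas[OF B_meas])

lemma Kb_meas[measurable]: "Kb B f m m1 \<in> borel_measurable M3"
  unfolding Kb_def[abs_def] by measurable

lemma Kb_abs:
  assumes "z \<in> space (M3 :: ('a \<times> 'a \<times> 'a) measure)"
  shows "\<bar>Kb B f m m1 z\<bar> = indicator precoll z * cross_B B m m1 (fst z) (fst (snd z)) (snd (snd z)) * \<bar>f m (fst z)\<bar> * \<bar>f m1 (fst (snd z))\<bar>"
proof -
  have n: "norm (snd (snd z)) = 1" using assms by (auto simp: space_pair_measure)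
  have "0 \<le> cross_B B m m1 (fst z) (fst (snd z)) (snd (snd z))"
    by (rule cross_nonneg[OF B_nonneg n])
  then show ?thesis unfolding Kb_def by (simp add: abs_mult)
qed

definition Nn :: "nat \<Rightarrow> nat \<Rightarrow> nat \<Rightarrow> ennreal" where
  "Nn m m1 m' = ennreal (A m m1 m') * (\<integral>\<^sup>+z. ennreal \<bar>Kb B f m m1 z\<bar> \<partial>M3)"

lemma Nn_fin: "(\<integral>\<^sup>+i. Nn (fst (fst i)) (snd (fst i)) (snd i) \<partial>count_space Iw) < \<infinity>"
proof -
  have eq: "nn_integral (lborel \<Otimes>\<^sub>M lborel \<Otimes>\<^sub>M sphere_measure)
              (\<lambda>(v, v1, \<Omega>). ennreal (indicator precoll (v, v1, \<Omega>) * cross_B B m m1 v v1 \<Omega> * \<bar>f m v\<bar> * \<bar>f m1 v1\<bar>))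
          = (\<integral>\<^sup>+z. ennreal \<bar>Kb B f m m1 z\<bar> \<partial>M3)" for m m1
    by (intro nn_integral_cong) (auto simp: Kb_abs split: prod.splits)
  show ?thesis
    unfolding NI_Iw unfolding Nn_def using f_decay unfolding eq .
qed

lemma Nn_single: "i \<in> Iw \<Longrightarrow> Nn (fst (fst i)) (snd (fst i)) (snd i) < \<infinity>"
  using nn_count_le[of i Iw "\<lambda>i. Nn (fst (fst i)) (snd (fst i)) (snd i)"] Nn_fin by auto

lemma summable_Iw:
  fixes g :: "(nat \<times> nat) \<times> nat \<Rightarrow> real"
  assumes "\<And>i. i \<in> Iw \<Longrightarrow> ennreal \<bar>g i\<bar> \<le> ennreal K * Nn (fst (fst i)) (snd (fst i)) (snd i)"
  shows "g summable_on Iw"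
proof (rule summable_of_nn_finite)
  have "(\<integral>\<^sup>+i. ennreal \<bar>g i\<bar> \<partial>count_space Iw) \<le> (\<integral>\<^sup>+i. ennreal K * Nn (fst (fst i)) (snd (fst i)) (snd i) \<partial>count_space Iw)"
    using assms by (intro nn_integral_mono) auto
  also have "\<dots> = ennreal K * (\<integral>\<^sup>+i. Nn (fst (fst i)) (snd (fst i)) (snd i) \<partial>count_space Iw)"
    by (rule nn_integral_cmult) simp
  also have "\<dots> < \<infinity>" using Nn_fin by (simp add: ennreal_mult_less_top)
  finally show "(\<integral>\<^sup>+i. ennreal \<bar>g i\<bar> \<partial>count_space Iw) < \<infinity>" .
qed

lemma Kb_phi_bound:
  assumes psi: "\<And>z. \<bar>\<psi> z\<bar> \<le> C"
    and that: "1 \<le> m" "1 \<le> m1" "1 \<le> m'" "m' < m + m1"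
  shows "ennreal \<bar>A m m1 m' * (\<integral>z. Kb B f m m1 z * \<psi> z \<partial>M3)\<bar> \<le> ennreal C * Nn m m1 m'"
proof -
  have A0: "0 \<le> A m m1 m'" using A_nonneg that by auto
  have "ennreal \<bar>\<integral>z. Kb B f m m1 z * \<psi> z \<partial>M3\<bar> \<le> (\<integral>\<^sup>+z. ennreal \<bar>Kb B f m m1 z * \<psi> z\<bar> \<partial>M3)"
    by (rule abs_integral_le_nn)
  also have "\<dots> \<le> (\<integral>\<^sup>+z. ennreal C * ennreal \<bar>Kb B f m m1 z\<bar> \<partial>M3)"
  proof (intro nn_integral_mono)
    fix z
    have "\<bar>Kb B f m m1 z * \<psi> z\<bar> \<le> C * \<bar>Kb B f m m1 z\<bar>"
      using psi[of z] unfolding abs_mult by (metis abs_ge_zero mult.commute mult_left_mono)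
    then show "ennreal \<bar>Kb B f m m1 z * \<psi> z\<bar> \<le> ennreal C * ennreal \<bar>Kb B f m m1 z\<bar>"
      using C_nonneg by (simp add: ennreal_mult[symmetric])
  qed
  also have "\<dots> = ennreal C * (\<integral>\<^sup>+z. ennreal \<bar>Kb B f m m1 z\<bar> \<partial>M3)"
    by (rule nn_integral_cmult) measurable
  finally have 1: "ennreal \<bar>\<integral>z. Kb B f m m1 z * \<psi> z \<partial>M3\<bar> \<le> ennreal C * (\<integral>\<^sup>+z. ennreal \<bar>Kb B f m m1 z\<bar> \<partial>M3)" .
  have "ennreal \<bar>A m m1 m' * (\<integral>z. Kb B f m m1 z * \<psi> z \<partial>M3)\<bar> = ennreal (A m m1 m') * ennreal \<bar>\<integral>z. Kb B f m m1 z * \<psi> z \<partial>M3\<bar>"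
    using A0 by (simp add: abs_mult ennreal_mult)
  also have "\<dots> \<le> ennreal (A m m1 m') * (ennreal C * (\<integral>\<^sup>+z. ennreal \<bar>Kb B f m m1 z\<bar> \<partial>M3))"
    by (intro mult_left_mono 1) simp
  also have "\<dots> = ennreal C * Nn m m1 m'"
    unfolding Nn_def by (simp add: ac_simps)
  finally show ?thesis .
qed

end


lemma Kb_swap: "Kb B f m1 m (v1, v, - \<Omega>) = Kb B f m m1 (v, v1, \<Omega>)"
proof -
  have i: "indicator precoll (v1, v, - \<Omega>) = (indicator precoll (v, v1, \<Omega>) :: real)"
    unfolding precoll_def by (simp add: indicator_def inner_diff_left)
  have n: "norm (v1 - v) = norm (v - v1)" by (rule norm_minus_commute)
  have c: "cross_B B m1 m v1 v (- \<Omega>) = cross_B B m m1 v v1 \<Omega>"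
    unfolding cross_B_def n by (simp add: add.commute mult.commute inner_diff_right)
  show ?thesis unfolding Kb_def using i c by simp
qed

lemma coll_swap:
  assumes "m' < m + m1"
  shows "coll_v m1 m (m + m1 - m') v1 v (- \<Omega>) = coll_v1 m m1 m' v v1 \<Omega>"
proof -
  have e: "m1 + m - (m + m1 - m') = m'" "m + m1 - (m + m1 - m') = m'" "m1 + m = m + m1" using assms by auto
  have r: "v1 - v - (2 * ((v1 - v) \<bullet> - \<Omega>)) *\<^sub>R - \<Omega> = - (v - v1 - (2 * ((v - v1) \<bullet> \<Omega>)) *\<^sub>R \<Omega>)"
    by (simp add: algebra_simps inner_diff_left)
  show ?thesis
    unfolding coll_v_def coll_v1_def e r
    by (simp add: algebra_simps mult.commute)
qed

context bme
begin

definition gw where "gw m m1 m' = A m m1 m' * (\<integral>z. Kb B f m m1 z * \<phi> m' (coll_v m m1 m' (fst z) (fst (snd z)) (snd (snd z))) \<partial>M3)"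
definition gw2 where "gw2 m m1 m' = A m m1 m' * (\<integral>z. Kb B f m m1 z * \<phi> (m + m1 - m') (coll_v1 m m1 m' (fst z) (fst (snd z)) (snd (snd z))) \<partial>M3)"
definition lw where "lw m m1 m' = A m m1 m' * (\<integral>z. Kb B f m m1 z * \<phi> m (fst z) \<partial>M3)"
definition lw2 where "lw2 m m1 m' = A m m1 m' * (\<integral>z. Kb B f m m1 z * \<phi> m1 (fst (snd z)) \<partial>M3)"

lemma Iw_mem: "i \<in> Iw \<longleftrightarrow> 1 \<le> fst (fst i) \<and> 1 \<le> snd (fst i) \<and> 1 \<le> snd i \<and> snd i < fst (fst i) + snd (fst i)"
  unfolding Iw_def by (cases i) auto

lemma summable_gw: "(\<lambda>i. gw (fst (fst i)) (snd (fst i)) (snd i)) summable_on Iw"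
  by (rule summable_Iw[of _ C]) (unfold gw_def, rule Kb_phi_bound, use phi_bdd Iw_mem in auto)
lemma summable_gw2: "(\<lambda>i. gw2 (fst (fst i)) (snd (fst i)) (snd i)) summable_on Iw"
  by (rule summable_Iw[of _ C]) (unfold gw2_def, rule Kb_phi_bound, use phi_bdd Iw_mem in auto)
lemma summable_lw: "(\<lambda>i. lw (fst (fst i)) (snd (fst i)) (snd i)) summable_on Iw"
  by (rule summable_Iw[of _ C]) (unfold lw_def, rule Kb_phi_bound, use phi_bdd Iw_mem in auto)
lemma summable_lw2: "(\<lambda>i. lw2 (fst (fst i)) (snd (fst i)) (snd i)) summable_on Iw"
  by (rule summable_Iw[of _ C]) (unfold lw2_def, rule Kb_phi_bound, use phi_bdd Iw_mem in auto)

lemma Kb_integrable: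
  assumes v: "1 \<le> m" "1 \<le> m1" "1 \<le> m'" "m' < m + m1" and A: "A m m1 m' \<noteq> 0"
  shows "integrable M3 (Kb B f m m1)"
proof (rule integrableI_bounded)
  have "Nn m m1 m' < \<infinity>" using Nn_single[of "((m, m1), m')"] v by (simp add: Iw_mem)
  moreover have "A m m1 m' > 0" using A A_nonneg v by force
  ultimately have "(\<integral>\<^sup>+z. ennreal (norm (Kb B f m m1 z)) \<partial>M3) = 0 \<or> (\<integral>\<^sup>+z. ennreal (norm (Kb B f m m1 z)) \<partial>M3) < \<infinity>"
    unfolding Nn_def by (simp add: ennreal_mult_less_top)
  then show "(\<integral>\<^sup>+z. ennreal (norm (Kb B f m m1 z)) \<partial>M3) < \<infinity>"
    by (elim disjE) simp_all
qed simp

lemma Kb_psi_integrable: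
  assumes "integrable M3 (Kb B f m m1)" and [measurable]: "\<psi> \<in> borel_measurable M3" and "\<And>z. \<bar>\<psi> z\<bar> \<le> C"
  shows "integrable M3 (\<lambda>z. Kb B f m m1 z * \<psi> z)"
proof -
  have "integrable M3 (\<lambda>z. C * Kb B f m m1 z)" using assms(1) by simp
  moreover have "(\<lambda>z. Kb B f m m1 z * \<psi> z) \<in> borel_measurable M3" by measurable
  moreover have "AE z in M3. norm (Kb B f m m1 z * \<psi> z) \<le> norm (C * Kb B f m m1 z)"
  proof (rule AE_I2)
    fix z
    have "\<bar>\<psi> z\<bar> * \<bar>Kb B f m m1 z\<bar> \<le> C * \<bar>Kb B f m m1 z\<bar>"
      by (rule mult_right_mono) (use assms(3) in auto)
    then show "norm (Kb B f m m1 z * \<psi> z) \<le> norm (C * Kb B f m m1 z)"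
      using C_nonneg by (simp add: abs_mult mult.commute)
  qed
  ultimately show ?thesis using Bochner_Integration.integrable_bound by blast
qed

lemma weak_term:
  assumes v: "1 \<le> m" "1 \<le> m1" "1 \<le> m'" "m' < m + m1"
  shows "A m m1 m' * set_lebesgue_integral M3 precoll
          (\<lambda>(v, v1, \<Omega>). cross_B B m m1 v v1 \<Omega>
              * (\<phi> m' (coll_v m m1 m' v v1 \<Omega>) + \<phi> (m + m1 - m') (coll_v1 m m1 m' v v1 \<Omega>)
                 - \<phi> m v - \<phi> m1 v1)
              * f m v * f m1 v1)
       = gw m m1 m' + gw2 m m1 m' - lw m m1 m' - lw2 m m1 m'"
proof (cases "A m m1 m' = 0")
  case True
  then show ?thesis by (simp add: gw_def gw2_def lw_def lw2_def)
next
  case False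
  have K: "integrable M3 (Kb B f m m1)" by (rule Kb_integrable[OF v False])
  let ?g1 = "\<lambda>z. Kb B f m m1 z * \<phi> m' (coll_v m m1 m' (fst z) (fst (snd z)) (snd (snd z)))"
  let ?g2 = "\<lambda>z. Kb B f m m1 z * \<phi> (m + m1 - m') (coll_v1 m m1 m' (fst z) (fst (snd z)) (snd (snd z)))"
  let ?l1 = "\<lambda>z. Kb B f m m1 z * \<phi> m (fst z)"
  let ?l2 = "\<lambda>z. Kb B f m m1 z * \<phi> m1 (fst (snd z))"
  have i1: "integrable M3 ?g1" by (rule Kb_psi_integrable[OF K]) (use phi_bdd in auto)
  have i2: "integrable M3 ?g2" by (rule Kb_psi_integrable[OF K]) (use phi_bdd in auto)
  have i3: "integrable M3 ?l1" by (rule Kb_psi_integrable[OF K]) (use phi_bdd in auto)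
  have i4: "integrable M3 ?l2" by (rule Kb_psi_integrable[OF K]) (use phi_bdd in auto)
  have pt: "indicator precoll z *\<^sub>R (\<lambda>(v, v1, \<Omega>). cross_B B m m1 v v1 \<Omega>
              * (\<phi> m' (coll_v m m1 m' v v1 \<Omega>) + \<phi> (m + m1 - m') (coll_v1 m m1 m' v v1 \<Omega>)
                 - \<phi> m v - \<phi> m1 v1)
              * f m v * f m1 v1) z = ?g1 z + ?g2 z - ?l1 z - ?l2 z" for z
    unfolding Kb_def by (cases z) (simp add: algebra_simps)
  have "set_lebesgue_integral M3 precoll
          (\<lambda>(v, v1, \<Omega>). cross_B B m m1 v v1 \<Omega>
              * (\<phi> m' (coll_v m m1 m' v v1 \<Omega>) + \<phi> (m + m1 - m') (coll_v1 m m1 m' v v1 \<Omega>)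
                 - \<phi> m v - \<phi> m1 v1)
              * f m v * f m1 v1)
      = (\<integral>z. ?g1 z + ?g2 z - ?l1 z - ?l2 z \<partial>M3)"
    unfolding set_lebesgue_integral_def pt ..
  also have "\<dots> = (\<integral>z. ?g1 z \<partial>M3) + (\<integral>z. ?g2 z \<partial>M3) - (\<integral>z. ?l1 z \<partial>M3) - (\<integral>z. ?l2 z \<partial>M3)"
    using i1 i2 i3 i4 by simp
  finally have X: "set_lebesgue_integral M3 precoll
          (\<lambda>(v, v1, \<Omega>). cross_B B m m1 v v1 \<Omega>
              * (\<phi> m' (coll_v m m1 m' v v1 \<Omega>) + \<phi> (m + m1 - m') (coll_v1 m m1 m' v v1 \<Omega>)
                 - \<phi> m v - \<phi> m1 v1)
              * f m v * f m1 v1)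
      = (\<integral>z. ?g1 z \<partial>M3) + (\<integral>z. ?g2 z \<partial>M3) - (\<integral>z. ?l1 z \<partial>M3) - (\<integral>z. ?l2 z \<partial>M3)" .
  show ?thesis unfolding X unfolding gw_def gw2_def lw_def lw2_def by (simp add: algebra_simps)
qed

lemma gw2_swap:
  assumes v: "1 \<le> m" "1 \<le> m1" "1 \<le> m'" "m' < m + m1"
  shows "gw2 m m1 m' = gw m1 m (m + m1 - m')"
proof -
  have A: "A m1 m (m1 + m - m') = A m m1 m'"
    using A_sym v by (metis add.commute)
  let ?F = "\<lambda>z. Kb B f m1 m z * \<phi> (m + m1 - m') (coll_v m1 m (m + m1 - m') (fst z) (fst (snd z)) (snd (snd z)))"
  have "(\<integral>z. ?F (fst (snd z), fst z, - snd (snd z)) \<partial>M3) = 1 * (\<integral>z. ?F z \<partial>M3)"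
    by (rule scales_integral[OF _ _ _]) (use scales_swap in auto)
  moreover have "?F (fst (snd z), fst z, - snd (snd z)) = Kb B f m m1 z * \<phi> (m + m1 - m') (coll_v1 m m1 m' (fst z) (fst (snd z)) (snd (snd z)))" for z
  proof -
    have e: "m1 + m - (m + m1 - m') = m'" using v by auto
    obtain v v1 \<Omega> where z: "z = (v, v1, \<Omega>)" by (cases z) auto
    show ?thesis unfolding z by (simp only: fst_conv snd_conv Kb_swap coll_swap[OF v(4)])
  qed
  ultimately show ?thesis
    unfolding gw_def gw2_def using v A by (simp add: add.commute)
qed

end


lemma has_sum_diff_real:
  fixes f g :: "'i \<Rightarrow> real"
  assumes "(f has_sum a) I" "(g has_sum b) I"
  shows "((\<lambda>x. f x - g x) has_sum (a - b)) I"
proof -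
  have "((\<lambda>x. - g x) has_sum (- b)) I" using assms(2) by (simp add: has_sum_uminus)
  from has_sum_add[OF assms(1) this] show ?thesis by simp
qed

lemma summable_on_diff_real:
  fixes f g :: "'i \<Rightarrow> real"
  assumes "f summable_on I" "g summable_on I"
  shows "(\<lambda>x. f x - g x) summable_on I"
  using has_sum_diff_real[OF has_sum_infsum[OF assms(1)] has_sum_infsum[OF assms(2)]] summable_on_def by blast

lemma infsum_diff_real:
  fixes f g :: "'i \<Rightarrow> real"
  assumes "f summable_on I" "g summable_on I"
  shows "(\<Sum>\<^sub>\<infinity>x\<in>I. f x - g x) = infsum f I - infsum g I"
  using has_sum_diff_real[OF has_sum_infsum[OF assms(1)] has_sum_infsum[OF assms(2)]] infsumI by blast

context bme
begin

lemma lw2_swap: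
  assumes v: "1 \<le> m" "1 \<le> m1" "1 \<le> m'" "m' < m + m1"
  shows "lw2 m m1 m' = lw m1 m (m + m1 - m')"
proof -
  have A: "A m1 m (m + m1 - m') = A m m1 m'"
    using A_sym v by (metis add.commute)
  let ?F = "\<lambda>z. Kb B f m1 m z * \<phi> m1 (fst z)"
  have pt: "?F (fst (snd z), fst z, - snd (snd z)) = Kb B f m m1 z * \<phi> m1 (fst (snd z))" for z
  proof -
    obtain v v1 \<Omega> where z: "z = (v, v1, \<Omega>)" by (cases z) auto
    show ?thesis unfolding z by (simp only: fst_conv snd_conv Kb_swap)
  qed
  have "(\<integral>z. Kb B f m m1 z * \<phi> m1 (fst (snd z)) \<partial>M3) = (\<integral>z. ?F (fst (snd z), fst z, - snd (snd z)) \<partial>M3)"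
    by (simp only: pt)
  also have "\<dots> = 1 * (\<integral>z. ?F z \<partial>M3)"
    by (rule scales_integral[OF _ _ _]) (use scales_swap in auto)
  finally have I: "(\<integral>z. Kb B f m m1 z * \<phi> m1 (fst (snd z)) \<partial>M3) = (\<integral>z. ?F z \<partial>M3)" by simp
  show ?thesis
    unfolding lw_def lw2_def I A ..
qed

abbreviation "gw' i \<equiv> gw (fst (fst i)) (snd (fst i)) (snd i)"
abbreviation "gw2' i \<equiv> gw2 (fst (fst i)) (snd (fst i)) (snd i)"
abbreviation "lw' i \<equiv> lw (fst (fst i)) (snd (fst i)) (snd i)"
abbreviation "lw2' i \<equiv> lw2 (fst (fst i)) (snd (fst i)) (snd i)"

lemma weak_value:
  "BME_weak_rhs A B f \<phi> = (\<Sum>\<^sub>\<infinity>i\<in>Iw. gw' i) - (\<Sum>\<^sub>\<infinity>i\<in>Iw. lw' i)"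
proof -
  define t where "t i = gw' i + gw2' i - lw' i - lw2' i" for i
  have st: "t summable_on Iw"
    unfolding t_def
    by (intro summable_on_diff_real summable_on_add summable_gw summable_gw2 summable_lw summable_lw2)
  have inner: "(\<Sum>m'=1..m+m1-1. A m m1 m' * set_lebesgue_integral M3 precoll
          (\<lambda>(v, v1, \<Omega>). cross_B B m m1 v v1 \<Omega>
              * (\<phi> m' (coll_v m m1 m' v v1 \<Omega>) + \<phi> (m + m1 - m') (coll_v1 m m1 m' v v1 \<Omega>)
                 - \<phi> m v - \<phi> m1 v1)
              * f m v * f m1 v1))
      = (\<Sum>\<^sub>\<infinity>m'\<in>{1..m+m1-1}. t ((m, m1), m'))" if "1 \<le> m" "1 \<le> m1" for m m1
  proof -
    have "(\<Sum>\<^sub>\<infinity>m'\<in>{1..m+m1-1}. t ((m, m1), m')) = (\<Sum>m'=1..m+m1-1. t ((m, m1), m'))" by simp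
    moreover have "(\<Sum>m'=1..m+m1-1. A m m1 m' * set_lebesgue_integral M3 precoll
          (\<lambda>(v, v1, \<Omega>). cross_B B m m1 v v1 \<Omega>
              * (\<phi> m' (coll_v m m1 m' v v1 \<Omega>) + \<phi> (m + m1 - m') (coll_v1 m m1 m' v v1 \<Omega>)
                 - \<phi> m v - \<phi> m1 v1)
              * f m v * f m1 v1)) = (\<Sum>m'=1..m+m1-1. t ((m, m1), m'))"
    proof (rule sum.cong[OF refl])
      fix m' assume "m' \<in> {1..m+m1-1}"
      then have "1 \<le> m'" "m' < m + m1" using that by auto
      then show "A m m1 m' * set_lebesgue_integral M3 precoll
          (\<lambda>(v, v1, \<Omega>). cross_B B m m1 v v1 \<Omega>
              * (\<phi> m' (coll_v m m1 m' v v1 \<Omega>) + \<phi> (m + m1 - m') (coll_v1 m m1 m' v v1 \<Omega>)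
                 - \<phi> m v - \<phi> m1 v1)
              * f m v * f m1 v1) = t ((m, m1), m')"
        unfolding t_def using weak_term that by simp
    qed
    ultimately show ?thesis by simp
  qed
  have "(\<Sum>\<^sub>\<infinity>(m, m1)\<in>{1..} \<times> {1..}. \<Sum>m'=1..m+m1-1. A m m1 m' * set_lebesgue_integral M3 precoll
          (\<lambda>(v, v1, \<Omega>). cross_B B m m1 v v1 \<Omega>
              * (\<phi> m' (coll_v m m1 m' v v1 \<Omega>) + \<phi> (m + m1 - m') (coll_v1 m m1 m' v v1 \<Omega>)
                 - \<phi> m v - \<phi> m1 v1)
              * f m v * f m1 v1))
      = (\<Sum>\<^sub>\<infinity>x\<in>{1..} \<times> {1..}. \<Sum>\<^sub>\<infinity>y\<in>(\<lambda>(m, m1). {1..m+m1-1}) x. t (x, y))"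
  proof (rule infsum_cong)
    fix x :: "nat \<times> nat" assume x: "x \<in> {1..} \<times> {1..}"
    obtain m m1 where xm: "x = (m, m1)" by (cases x) auto
    show "(case x of (m, m1) \<Rightarrow> \<Sum>m'=1..m+m1-1. A m m1 m' * set_lebesgue_integral M3 precoll
          (\<lambda>(v, v1, \<Omega>). cross_B B m m1 v v1 \<Omega>
              * (\<phi> m' (coll_v m m1 m' v v1 \<Omega>) + \<phi> (m + m1 - m') (coll_v1 m m1 m' v v1 \<Omega>)
                 - \<phi> m v - \<phi> m1 v1)
              * f m v * f m1 v1))
      = (\<Sum>\<^sub>\<infinity>y\<in>(\<lambda>(m, m1). {1..m+m1-1}) x. t (x, y))"
      using inner[of m m1] x unfolding xm by simp
  qed
  also have "\<dots> = (\<Sum>\<^sub>\<infinity>i\<in>Iw. t i)"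
    unfolding Iw_def by (rule infsum_Sigma_banach) (use st in \<open>simp add: Iw_def\<close>)
  also have "\<dots> = (\<Sum>\<^sub>\<infinity>i\<in>Iw. gw' i) + (\<Sum>\<^sub>\<infinity>i\<in>Iw. gw2' i) - (\<Sum>\<^sub>\<infinity>i\<in>Iw. lw' i) - (\<Sum>\<^sub>\<infinity>i\<in>Iw. lw2' i)"
    unfolding t_def
    by (subst infsum_diff_real, intro summable_on_diff_real summable_on_add summable_gw summable_gw2 summable_lw summable_lw2,
        rule summable_lw2,
        subst infsum_diff_real, intro summable_on_add summable_gw summable_gw2, rule summable_lw,
        subst infsum_add, rule summable_gw, rule summable_gw2, rule refl)
  also have "(\<Sum>\<^sub>\<infinity>i\<in>Iw. gw2' i) = (\<Sum>\<^sub>\<infinity>i\<in>Iw. gw' i)"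
  proof -
    have "(\<Sum>\<^sub>\<infinity>i\<in>Iw. gw2' i) = (\<Sum>\<^sub>\<infinity>i\<in>Iw. gw' ((snd (fst i), fst (fst i)), fst (fst i) + snd (fst i) - snd i))"
      by (intro infsum_cong) (auto simp: Iw_mem gw2_swap)
    also have "\<dots> = (\<Sum>\<^sub>\<infinity>i\<in>Iw. gw' i)"
      by (rule infsum_reindex_bij_betw[OF bij_swap])
    finally show ?thesis .
  qed
  also have "(\<Sum>\<^sub>\<infinity>i\<in>Iw. lw2' i) = (\<Sum>\<^sub>\<infinity>i\<in>Iw. lw' i)"
  proof -
    have "(\<Sum>\<^sub>\<infinity>i\<in>Iw. lw2' i) = (\<Sum>\<^sub>\<infinity>i\<in>Iw. lw' ((snd (fst i), fst (fst i)), fst (fst i) + snd (fst i) - snd i))"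
      by (intro infsum_cong) (auto simp: Iw_mem lw2_swap)
    also have "\<dots> = (\<Sum>\<^sub>\<infinity>i\<in>Iw. lw' i)"
      by (rule infsum_reindex_bij_betw[OF bij_swap])
    finally show ?thesis .
  qed
  finally show ?thesis unfolding BME_weak_rhs_def by simp
qed

end


lemma J_c:
  assumes "1 \<le> p" "1 \<le> q" "1 \<le> m" "m < p + q"
  shows "(real m * real (p + q - m) / (real p * real q)) powr (real DIM('a::euclidean_space) / 2)
           * (1 / kf m (p + q - m) p ^ DIM('a)) = 1"
proof -
  define X where "X = real m * real (p + q - m) / (real p * real q)"
  have X: "X > 0" unfolding X_def using assms by auto
  have e: "m + (p + q - m) - p = q" using assms by auto
  have k: "kf m (p + q - m) p = sqrt X" unfolding kf_def e X_def ..
  have "sqrt X ^ DIM('a) = X powr (real DIM('a) / 2)"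
    using X by (simp add: powr_half_sqrt[symmetric] powr_power)
  then show ?thesis unfolding k X_def[symmetric] using X by simp
qed

lemma ind_eq: "indicator {(v1, \<Omega>). (v - v1) \<bullet> \<Omega> \<le> 0} y = (indicator precoll (v, y) :: real)"
  unfolding precoll_def by (cases y) (simp add: indicator_def)

context bme
begin

definition hg :: "nat \<Rightarrow> nat \<times> nat \<Rightarrow> 'a \<Rightarrow> 'a \<times> 'a \<Rightarrow> real" where
  "hg m j v y = \<phi> m v * (case j of (m', m1') \<Rightarrow> A m' m1' m *
     (indicator {(v1, \<Omega>). (v - v1) \<bullet> \<Omega> \<le> 0} y *\<^sub>R
       (\<lambda>(v1, \<Omega>). cross_B B m (m' + m1' - m) v v1 \<Omega>
              * f m' (coll_v m (m' + m1' - m) m' v v1 \<Omega>)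
              * f m1' (coll_v1 m (m' + m1' - m) m' v v1 \<Omega>)
              * (real m * real (m' + m1' - m) / (real m' * real m1')) powr (real DIM('a) / 2)) y))"

definition Gfun where
  "Gfun p q m z = Kb B f p q z * \<phi> m (coll_v p q m (fst z) (fst (snd z)) (snd (snd z)))"

lemma Gfun_meas[measurable]: "Gfun p q m \<in> borel_measurable M3"
  unfolding Gfun_def[abs_def] by measurable

lemma hg_meas: "(\<lambda>(v, y). hg m j v y) \<in> borel_measurable (lborel \<Otimes>\<^sub>M (lborel \<Otimes>\<^sub>M sphere_measure))"
proof -
  obtain p q where j: "j = (p, q)" by (cases j) auto
  have "(\<lambda>(v, y). hg m j v y) = (\<lambda>z. \<phi> m (fst z) * (A p q m * (indicator precoll z *
       (cross_B B m (p + q - m) (fst z) (fst (snd z)) (snd (snd z))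
              * f p (coll_v m (p + q - m) p (fst z) (fst (snd z)) (snd (snd z)))
              * f q (coll_v1 m (p + q - m) p (fst z) (fst (snd z)) (snd (snd z)))
              * (real m * real (p + q - m) / (real p * real q)) powr (real DIM('a) / 2)))))"
    by (auto simp: hg_def j ind_eq[symmetric] split: prod.splits)
  also have "\<dots> \<in> borel_measurable M3" by measurable
  finally show ?thesis .
qed

lemma hg_pt:
  assumes v: "1 \<le> m" "(p, q) \<in> Jg m" and z: "z \<in> space (M3 :: ('a \<times> 'a \<times> 'a) measure)"
  shows "hg m (p, q) (fst z) (snd z) =
    A p q m * ((real m * real (p + q - m) / (real p * real q)) powr (real DIM('a) / 2)
       * Gfun p q m (Phi m (p + q - m) p z))"
proof -
  have pq: "1 \<le> p" "1 \<le> q" "m < p + q" using v unfolding Jg_def by auto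
  define s where "s = p + q - m"
  have vt: "1 \<le> m" "1 \<le> s" "1 \<le> p" "p < m + s" using pq v unfolding s_def by auto
  have ms: "m + s - p = q" unfolding s_def using pq by auto
  obtain vv vv1 \<Omega> where zz: "z = (vv, vv1, \<Omega>)" by (cases z) auto
  have n: "norm \<Omega> = 1" using z zz by (auto simp: space_pair_measure)
  define w where "w = coll_v m s p vv vv1 \<Omega>"
  define w1 where "w1 = coll_v1 m s p vv vv1 \<Omega>"
  have Ph: "Phi m s p z = (w, w1, - \<Omega>)" unfolding Phi_def zz w_def w1_def by simp
  have pre: "(w - w1) \<bullet> (- \<Omega>) = kf m s p * ((vv - vv1) \<bullet> \<Omega>)"
    unfolding w_def w1_def by (rule coll_pre[OF vt n])
  have kpos: "kf m s p > 0" by (rule coll_scalars(3)[OF vt])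
  have ip: "indicator precoll (w, w1, - \<Omega>) = (indicator precoll (vv, vv1, \<Omega>) :: real)"
  proof -
    have "(w - w1) \<bullet> (- \<Omega>) \<le> 0 \<longleftrightarrow> (vv - vv1) \<bullet> \<Omega> \<le> 0"
      unfolding pre using kpos by (simp add: mult_le_0_iff)
    then show ?thesis unfolding precoll_def by (simp add: indicator_def)
  qed
  have cr: "cross_B B p q w w1 (- \<Omega>) = cross_B B m s vv vv1 \<Omega>"
    using coll_cross[OF vt n, of B vv vv1] unfolding ms w_def w1_def .
  have iv: "coll_v p q m w w1 (- \<Omega>) = vv"
    using coll_inv(1)[OF vt n, of vv vv1] unfolding ms w_def w1_def .
  have G: "Gfun p q m (Phi m s p z) = indicator precoll (vv, vv1, \<Omega>) * cross_B B m s vv vv1 \<Omega> * f p w * f q w1 * \<phi> m vv"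
    unfolding Ph Gfun_def Kb_def using ip cr iv by simp
  show ?thesis
    unfolding s_def[symmetric] G unfolding hg_def zz w_def[symmetric] w1_def[symmetric]
    by (simp add: ind_eq s_def[symmetric] w_def[symmetric] w1_def[symmetric] ac_simps)
qed

end


context bme
begin

lemma Jg_valid: "(p, q) \<in> Jg m \<Longrightarrow> 1 \<le> m \<Longrightarrow> 1 \<le> p \<and> 1 \<le> q \<and> m < p + q"
  unfolding Jg_def by auto

lemma hg_int:
  assumes m: "1 \<le> m" and j: "(p, q) \<in> Jg m"
  shows "(\<integral>z. hg m (p, q) (fst z) (snd z) \<partial>M3) = gw p q m"
proof -
  from Jg_valid[OF j m] have pq: "1 \<le> p" "1 \<le> q" "m < p + q" by auto
  define s where "s = p + q - m"
  have vt: "1 \<le> m" "1 \<le> s" "1 \<le> p" "p < m + s" using pq m unfolding s_def by auto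
  define J where "J = (real m * real (p + q - m) / (real p * real q)) powr (real DIM('a) / 2)"
  define c where "c = 1 / kf m s p ^ DIM('a)"
  have c0: "c \<ge> 0" unfolding c_def using coll_scalars(3)[OF vt] by simp
  have Jc: "J * c = 1" unfolding J_def c_def s_def by (rule J_c[OF pq(1,2) m pq(3)])
  have "(\<integral>z. hg m (p, q) (fst z) (snd z) \<partial>M3) = (\<integral>z. A p q m * (J * Gfun p q m (Phi m s p z)) \<partial>M3)"
    by (rule Bochner_Integration.integral_cong[OF refl]) (use hg_pt[OF m j] in \<open>simp add: J_def s_def\<close>)
  also have "\<dots> = A p q m * J * (\<integral>z. Gfun p q m (Phi m s p z) \<partial>M3)" by simp
  also have "(\<integral>z. Gfun p q m (Phi m s p z) \<partial>M3) = c * (\<integral>z. Gfun p q m z \<partial>M3)"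
    by (rule scales_integral[OF _ c0]) (use scales_Phi[OF vt] in \<open>simp_all add: c_def\<close>)
  also have "A p q m * J * (c * (\<integral>z. Gfun p q m z \<partial>M3)) = A p q m * (\<integral>z. Gfun p q m z \<partial>M3)"
    using Jc by (metis mult.assoc mult.left_commute mult_1)
  finally show ?thesis unfolding gw_def Gfun_def .
qed

lemma hg_nn:
  assumes m: "1 \<le> m" and j: "(p, q) \<in> Jg m"
  shows "(\<integral>\<^sup>+z. ennreal \<bar>hg m (p, q) (fst z) (snd z)\<bar> \<partial>M3) \<le> ennreal C * Nn p q m"
proof -
  from Jg_valid[OF j m] have pq: "1 \<le> p" "1 \<le> q" "m < p + q" by auto
  define s where "s = p + q - m"
  have vt: "1 \<le> m" "1 \<le> s" "1 \<le> p" "p < m + s" using pq m unfolding s_def by auto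
  define J where "J = (real m * real (p + q - m) / (real p * real q)) powr (real DIM('a) / 2)"
  define c where "c = 1 / kf m s p ^ DIM('a)"
  have c0: "c \<ge> 0" unfolding c_def using coll_scalars(3)[OF vt] by simp
  have J0: "J \<ge> 0" unfolding J_def by simp
  have A0: "A p q m \<ge> 0" using A_nonneg pq m by auto
  have Jc: "J * c = 1" unfolding J_def c_def s_def by (rule J_c[OF pq(1,2) m pq(3)])
  have "(\<integral>\<^sup>+z. ennreal \<bar>hg m (p, q) (fst z) (snd z)\<bar> \<partial>M3)
      = (\<integral>\<^sup>+z. ennreal (A p q m * J) * ennreal \<bar>Gfun p q m (Phi m s p z)\<bar> \<partial>M3)"
  proof (rule nn_integral_cong)
    fix z :: "'a \<times> 'a \<times> 'a" assume z: "z \<in> space M3"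
    show "ennreal \<bar>hg m (p, q) (fst z) (snd z)\<bar> = ennreal (A p q m * J) * ennreal \<bar>Gfun p q m (Phi m s p z)\<bar>"
      unfolding hg_pt[OF m j z] unfolding J_def[symmetric] unfolding s_def[symmetric] using A0 J0
      by (simp add: abs_mult ennreal_mult mult.assoc)
  qed
  also have "\<dots> = ennreal (A p q m * J) * (\<integral>\<^sup>+z. ennreal \<bar>Gfun p q m (Phi m s p z)\<bar> \<partial>M3)"
    by (rule nn_integral_cmult) (use scalesD(1)[OF scales_Phi[OF vt]] in measurable)
  also have "(\<integral>\<^sup>+z. ennreal \<bar>Gfun p q m (Phi m s p z)\<bar> \<partial>M3) = ennreal c * (\<integral>\<^sup>+z. ennreal \<bar>Gfun p q m z\<bar> \<partial>M3)"
    using scales_nn_integral[OF scales_Phi[OF vt], of "\<lambda>z. ennreal \<bar>Gfun p q m z\<bar>"] unfolding c_def by simp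
  also have "ennreal (A p q m * J) * (ennreal c * (\<integral>\<^sup>+z. ennreal \<bar>Gfun p q m z\<bar> \<partial>M3))
      = ennreal (A p q m) * (\<integral>\<^sup>+z. ennreal \<bar>Gfun p q m z\<bar> \<partial>M3)"
  proof -
    have "ennreal (A p q m * J) * ennreal c = ennreal (A p q m)"
      using A0 J0 c0 Jc by (simp add: ennreal_mult[symmetric] mult.assoc)
    then show ?thesis by (simp add: mult.assoc[symmetric])
  qed
  also have "\<dots> \<le> ennreal (A p q m) * (ennreal C * (\<integral>\<^sup>+z. ennreal \<bar>Kb B f p q z\<bar> \<partial>M3))"
  proof (intro mult_left_mono)
    have "(\<integral>\<^sup>+z. ennreal \<bar>Gfun p q m z\<bar> \<partial>M3) \<le> (\<integral>\<^sup>+z. ennreal C * ennreal \<bar>Kb B f p q z\<bar> \<partial>M3)"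
    proof (intro nn_integral_mono)
      fix z
      have "\<bar>Gfun p q m z\<bar> \<le> C * \<bar>Kb B f p q z\<bar>"
        unfolding Gfun_def abs_mult using phi_bdd by (metis abs_ge_zero mult.commute mult_left_mono)
      then show "ennreal \<bar>Gfun p q m z\<bar> \<le> ennreal C * ennreal \<bar>Kb B f p q z\<bar>"
        using C_nonneg by (simp add: ennreal_mult[symmetric])
    qed
    also have "\<dots> = ennreal C * (\<integral>\<^sup>+z. ennreal \<bar>Kb B f p q z\<bar> \<partial>M3)"
      by (rule nn_integral_cmult) measurable
    finally show "(\<integral>\<^sup>+z. ennreal \<bar>Gfun p q m z\<bar> \<partial>M3) \<le> ennreal C * (\<integral>\<^sup>+z. ennreal \<bar>Kb B f p q z\<bar> \<partial>M3)" .
  qed simp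
  also have "\<dots> = ennreal C * Nn p q m" unfolding Nn_def by (simp add: ac_simps)
  finally show ?thesis .
qed

definition hl :: "nat \<Rightarrow> nat \<times> nat \<Rightarrow> 'a \<Rightarrow> 'a \<times> 'a \<Rightarrow> real" where
  "hl m j v y = \<phi> m v * (case j of (m1, m') \<Rightarrow> A m m1 m' *
     (indicator {(v1, \<Omega>). (v - v1) \<bullet> \<Omega> \<le> 0} y *\<^sub>R
       (\<lambda>(v1, \<Omega>). cross_B B m m1 v v1 \<Omega> * f m v * f m1 v1) y))"

lemma hl_pt: "hl m (m1, m') (fst z) (snd z) = A m m1 m' * (Kb B f m m1 z * \<phi> m (fst z))"
  unfolding hl_def Kb_def by (cases z) (simp add: ind_eq ac_simps)

lemma hl_meas: "(\<lambda>(v, y). hl m j v y) \<in> borel_measurable (lborel \<Otimes>\<^sub>M (lborel \<Otimes>\<^sub>M sphere_measure))"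
proof -
  obtain m1 m' where j: "j = (m1, m')" by (cases j) auto
  have "(\<lambda>(v, y). hl m j v y) = (\<lambda>z. A m m1 m' * (Kb B f m m1 z * \<phi> m (fst z)))"
    using hl_pt[of m m1 m'] unfolding j by (auto simp: split: prod.splits)
  also have "\<dots> \<in> borel_measurable M3" by measurable
  finally show ?thesis .
qed

lemma hl_int: "(\<integral>z. hl m (m1, m') (fst z) (snd z) \<partial>M3) = lw m m1 m'"
  unfolding hl_pt lw_def by (simp add: ac_simps)

lemma hl_nn:
  assumes "1 \<le> m" "1 \<le> m1" "1 \<le> m'" "m' < m + m1"
  shows "(\<integral>\<^sup>+z. ennreal \<bar>hl m (m1, m') (fst z) (snd z)\<bar> \<partial>M3) \<le> ennreal C * Nn m m1 m'"
proof -
  have A0: "A m m1 m' \<ge> 0" using A_nonneg assms by auto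
  have "(\<integral>\<^sup>+z. ennreal \<bar>hl m (m1, m') (fst z) (snd z)\<bar> \<partial>M3) = (\<integral>\<^sup>+z. ennreal (A m m1 m') * ennreal \<bar>Kb B f m m1 z * \<phi> m (fst z)\<bar> \<partial>M3)"
    unfolding hl_pt using A0 by (simp add: abs_mult ennreal_mult)
  also have "\<dots> \<le> (\<integral>\<^sup>+z. ennreal (A m m1 m') * (ennreal C * ennreal \<bar>Kb B f m m1 z\<bar>) \<partial>M3)"
  proof (intro nn_integral_mono mult_left_mono)
    fix z
    have "\<bar>Kb B f m m1 z * \<phi> m (fst z)\<bar> \<le> C * \<bar>Kb B f m m1 z\<bar>"
      unfolding abs_mult using phi_bdd by (metis abs_ge_zero mult.commute mult_left_mono)
    then show "ennreal \<bar>Kb B f m m1 z * \<phi> m (fst z)\<bar> \<le> ennreal C * ennreal \<bar>Kb B f m m1 z\<bar>"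
      using C_nonneg by (simp add: ennreal_mult[symmetric])
  qed simp
  also have "\<dots> = ennreal C * Nn m m1 m'"
    unfolding Nn_def by (subst nn_integral_cmult[symmetric], measurable)+ (simp add: ac_simps)
  finally show ?thesis .
qed

end


context bme
begin

abbreviation "NN \<equiv> lborel \<Otimes>\<^sub>M (sphere_measure :: 'a measure)"

definition GsF where
  "GsF m v = (\<Sum>\<^sub>\<infinity>(m', m1')\<in>{(p, q). 1 \<le> p \<and> 1 \<le> q \<and> m + 1 \<le> p + q}.
        A m' m1' m *
        set_lebesgue_integral NN {(v1, \<Omega>). (v - v1) \<bullet> \<Omega> \<le> 0}
          (\<lambda>(v1, \<Omega>). cross_B B m (m' + m1' - m) v v1 \<Omega>
              * f m' (coll_v m (m' + m1' - m) m' v v1 \<Omega>)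
              * f m1' (coll_v1 m (m' + m1' - m) m' v v1 \<Omega>)
              * (real m * real (m' + m1' - m) / (real m' * real m1')) powr (real DIM('a) / 2)))"

definition Xl where
  "Xl m v j = (case j of (m1, m') \<Rightarrow> A m m1 m' *
        set_lebesgue_integral NN {(v1, \<Omega>). (v - v1) \<bullet> \<Omega> \<le> 0}
          (\<lambda>(v1, \<Omega>). cross_B B m m1 v v1 \<Omega> * f m v * f m1 v1))"

definition LsF where
  "LsF m v = (\<Sum>\<^sub>\<infinity>m1\<in>{1..}. \<Sum>m'=1..m+m1-1. A m m1 m' *
        set_lebesgue_integral NN {(v1, \<Omega>). (v - v1) \<bullet> \<Omega> \<le> 0}
          (\<lambda>(v1, \<Omega>). cross_B B m m1 v v1 \<Omega> * f m v * f m1 v1))"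

lemma BME_split: "BME_strong A B f m v * \<phi> m v = \<phi> m v * GsF m v - \<phi> m v * LsF m v"
  unfolding BME_strong_def GsF_def LsF_def by (simp add: algebra_simps)

lemma hg_inner: "(\<Sum>\<^sub>\<infinity>j\<in>Jg m. \<integral>y. hg m j v y \<partial>NN) = \<phi> m v * GsF m v"
proof -
  have "(\<integral>y. hg m j v y \<partial>NN) = \<phi> m v * (case j of (m', m1') \<Rightarrow> A m' m1' m *
        set_lebesgue_integral NN {(v1, \<Omega>). (v - v1) \<bullet> \<Omega> \<le> 0}
          (\<lambda>(v1, \<Omega>). cross_B B m (m' + m1' - m) v v1 \<Omega>
              * f m' (coll_v m (m' + m1' - m) m' v v1 \<Omega>)
              * f m1' (coll_v1 m (m' + m1' - m) m' v v1 \<Omega>)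
              * (real m * real (m' + m1' - m) / (real m' * real m1')) powr (real DIM('a) / 2)))" for j
    unfolding hg_def set_lebesgue_integral_def by (cases j) simp
  then show ?thesis
    unfolding GsF_def Jg_def by (simp add: infsum_cmult_right')
qed

lemma hl_inner: "(\<integral>y. hl m j v y \<partial>NN) = \<phi> m v * Xl m v j"
  unfolding hl_def Xl_def set_lebesgue_integral_def by (cases j) simp

lemma Xl_LsF:
  assumes "Xl m v summable_on Jl m"
  shows "(\<Sum>\<^sub>\<infinity>j\<in>Jl m. Xl m v j) = LsF m v"
proof -
  have s: "(\<lambda>(x, y). Xl m v (x, y)) summable_on Sigma {1..} (\<lambda>m1. {1..m + m1 - 1})"
    using assms unfolding Jl_def by simp
  have "(\<Sum>\<^sub>\<infinity>j\<in>Jl m. Xl m v j) = (\<Sum>\<^sub>\<infinity>m1\<in>{1..}. \<Sum>\<^sub>\<infinity>m'\<in>{1..m + m1 - 1}. Xl m v (m1, m'))"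
    unfolding Jl_def using infsum_Sigma_banach[OF s] by simp
  also have "\<dots> = LsF m v"
    unfolding LsF_def Xl_def by simp
  finally show ?thesis .
qed

lemma Xl_meas: "(\<lambda>v. Xl m v j) \<in> borel_measurable lborel"
proof -
  interpret NN: sigma_finite_measure NN by (rule sfY)
  obtain m1 m' where j: "j = (m1, m')" by (cases j) auto
  have pt: "indicator {(v1, \<Omega>). (v - v1) \<bullet> \<Omega> \<le> 0} y *\<^sub>R
          (\<lambda>(v1, \<Omega>). cross_B B m m1 v v1 \<Omega> * f m v * f m1 v1) y = Kb B f m m1 (v, y)" for v y
    unfolding Kb_def ind_eq by (cases y) (simp add: ac_simps)
  have "(\<lambda>v. Xl m v j) = (\<lambda>v. A m m1 m' * (\<integral>y. Kb B f m m1 (v, y) \<partial>NN))"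
    unfolding Xl_def j set_lebesgue_integral_def by (simp only: pt prod.case)
  also have "\<dots> \<in> borel_measurable lborel"
  proof -
    have "(\<lambda>(v, y). Kb B f m m1 (v, y)) \<in> borel_measurable (lborel \<Otimes>\<^sub>M NN)"
      using Kb_meas[of m m1] by (simp add: split_beta')
    then have "(\<lambda>v. \<integral>y. Kb B f m m1 (v, y) \<partial>NN) \<in> borel_measurable lborel"
      by (rule NN.borel_measurable_lebesgue_integral)
    then show ?thesis by simp
  qed
  finally show ?thesis .
qed

lemma LsF_meas: "(\<lambda>v. LsF m v) \<in> borel_measurable lborel"
proof -
  have "(\<lambda>v. LsF m v) = (\<lambda>v. \<Sum>\<^sub>\<infinity>m1\<in>{1..}. \<Sum>m'=1..m+m1-1. Xl m v (m1, m'))"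
    unfolding LsF_def Xl_def by simp
  also have "\<dots> \<in> borel_measurable lborel"
    by (rule borel_measurable_infsum_countable) (use Xl_meas in \<open>auto intro!: borel_measurable_sum\<close>)
  finally show ?thesis .
qed

end


context bme
begin

lemma fin_g: "(\<integral>\<^sup>+m. (\<integral>\<^sup>+j. (\<integral>\<^sup>+z. ennreal \<bar>hg m j (fst z) (snd z)\<bar> \<partial>(lborel \<Otimes>\<^sub>M NN))
                 \<partial>count_space (Jg m)) \<partial>count_space {1..}) < \<infinity>"
proof -
  have "(\<integral>\<^sup>+m. (\<integral>\<^sup>+j. (\<integral>\<^sup>+z. ennreal \<bar>hg m j (fst z) (snd z)\<bar> \<partial>(lborel \<Otimes>\<^sub>M NN))
                 \<partial>count_space (Jg m)) \<partial>count_space {1..})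
     \<le> (\<integral>\<^sup>+m. (\<integral>\<^sup>+j. ennreal C * Nn (fst j) (snd j) m \<partial>count_space (Jg m)) \<partial>count_space {1..})"
  proof (intro nn_integral_mono)
    fix m j assume m: "m \<in> space (count_space {1::nat..})" and j: "j \<in> space (count_space (Jg m))"
    obtain p q where pq: "j = (p, q)" by (cases j) auto
    show "(\<integral>\<^sup>+z. ennreal \<bar>hg m j (fst z) (snd z)\<bar> \<partial>(lborel \<Otimes>\<^sub>M NN)) \<le> ennreal C * Nn (fst j) (snd j) m"
      using hg_nn[of m p q] m j unfolding pq by simp
  qed
  also have "\<dots> = (\<integral>\<^sup>+i. ennreal C * Nn (fst (fst i)) (snd (fst i)) (snd i) \<partial>count_space Iw)"
    using nn_Sigma_reindex[OF bij_gain, where h'="\<lambda>x. ennreal C * Nn (fst (snd x)) (snd (snd x)) (fst x)"] by simp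
  also have "\<dots> = ennreal C * (\<integral>\<^sup>+i. Nn (fst (fst i)) (snd (fst i)) (snd i) \<partial>count_space Iw)"
    by (rule nn_integral_cmult) simp
  also have "\<dots> < \<infinity>" using Nn_fin by (simp add: ennreal_mult_less_top)
  finally show ?thesis .
qed

lemma fin_l: "(\<integral>\<^sup>+m. (\<integral>\<^sup>+j. (\<integral>\<^sup>+z. ennreal \<bar>hl m j (fst z) (snd z)\<bar> \<partial>(lborel \<Otimes>\<^sub>M NN))
                 \<partial>count_space (Jl m)) \<partial>count_space {1..}) < \<infinity>"
proof -
  have "(\<integral>\<^sup>+m. (\<integral>\<^sup>+j. (\<integral>\<^sup>+z. ennreal \<bar>hl m j (fst z) (snd z)\<bar> \<partial>(lborel \<Otimes>\<^sub>M NN))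
                 \<partial>count_space (Jl m)) \<partial>count_space {1..})
     \<le> (\<integral>\<^sup>+m. (\<integral>\<^sup>+j. ennreal C * Nn m (fst j) (snd j) \<partial>count_space (Jl m)) \<partial>count_space {1..})"
  proof (intro nn_integral_mono)
    fix m j assume m: "m \<in> space (count_space {1::nat..})" and j: "j \<in> space (count_space (Jl m))"
    obtain m1 m' where pq: "j = (m1, m')" by (cases j) auto
    have v: "1 \<le> m" "1 \<le> m1" "1 \<le> m'" "m' < m + m1" using m j unfolding pq Jl_def by auto
    show "(\<integral>\<^sup>+z. ennreal \<bar>hl m j (fst z) (snd z)\<bar> \<partial>(lborel \<Otimes>\<^sub>M NN)) \<le> ennreal C * Nn m (fst j) (snd j)"
      using hl_nn[OF v] unfolding pq by simp
  qed
  also have "\<dots> = (\<integral>\<^sup>+i. ennreal C * Nn (fst (fst i)) (snd (fst i)) (snd i) \<partial>count_space Iw)"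
    using nn_Sigma_reindex[OF bij_loss, where h'="\<lambda>x. ennreal C * Nn (fst x) (fst (snd x)) (snd (snd x))"] by simp
  also have "\<dots> = ennreal C * (\<integral>\<^sup>+i. Nn (fst (fst i)) (snd (fst i)) (snd i) \<partial>count_space Iw)"
    by (rule nn_integral_cmult) simp
  also have "\<dots> < \<infinity>" using Nn_fin by (simp add: ennreal_mult_less_top)
  finally show ?thesis .
qed

lemma main: "((\<lambda>m. \<integral>v. BME_strong A B f m v * \<phi> m v \<partial>lborel) has_sum BME_weak_rhs A B f \<phi>) {1..}"
proof -
  note GLg = GL[where h=hg and N=NN and J=Jg, OF sfY countable_Jg hg_meas fin_g]
  note GLl = GL[where h=hl and N=NN and J=Jl, OF sfY countable_Jl hl_meas fin_l]
    have gfun: "(\<lambda>v. \<Sum>\<^sub>\<infinity>j\<in>Jg m. \<integral>y. hg m j v y \<partial>NN) = (\<lambda>v. \<phi> m v * GsF m v)" for m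
    by (simp add: hg_inner)
  have gval: "(\<Sum>\<^sub>\<infinity>m\<in>{1..}. \<Sum>\<^sub>\<infinity>j\<in>Jg m. \<integral>z. hg m j (fst z) (snd z) \<partial>(lborel \<Otimes>\<^sub>M NN)) = (\<Sum>\<^sub>\<infinity>i\<in>Iw. gw' i)"
  proof -
    have "(\<Sum>\<^sub>\<infinity>m\<in>{1..}. \<Sum>\<^sub>\<infinity>j\<in>Jg m. \<integral>z. hg m j (fst z) (snd z) \<partial>(lborel \<Otimes>\<^sub>M NN))
        = (\<Sum>\<^sub>\<infinity>m\<in>{1..}. \<Sum>\<^sub>\<infinity>j\<in>Jg m. gw (fst j) (snd j) m)"
    proof (intro infsum_cong)
      fix m j assume "m \<in> {1::nat..}" "j \<in> Jg m"
      then show "(\<integral>z. hg m j (fst z) (snd z) \<partial>(lborel \<Otimes>\<^sub>M NN)) = gw (fst j) (snd j) m"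
        using hg_int[of m "fst j" "snd j"] by simp
    qed
    also have "\<dots> = (\<Sum>\<^sub>\<infinity>i\<in>Iw. gw' i)"
      using infsum_Sigma_reindex(1)[OF bij_gain, where h'="\<lambda>x. gw (fst (snd x)) (snd (snd x)) (fst x)"] summable_gw
      by simp
    finally show ?thesis .
  qed
  have hasg: "((\<lambda>m. \<integral>v. \<phi> m v * GsF m v \<partial>lborel) has_sum (\<Sum>\<^sub>\<infinity>i\<in>Iw. gw' i)) {1..}"
    using GLg(1) unfolding gfun gval .
  have intg: "integrable lborel (\<lambda>v. \<phi> m v * GsF m v)" if "1 \<le> m" for m
    using GLg(3)[OF that] unfolding gfun .
    have lfun: "(\<integral>v. (\<Sum>\<^sub>\<infinity>j\<in>Jl m. \<integral>y. hl m j v y \<partial>NN) \<partial>lborel) = (\<integral>v. \<phi> m v * LsF m v \<partial>lborel)"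
    and intl: "integrable lborel (\<lambda>v. \<phi> m v * LsF m v)" if m: "1 \<le> m" for m
  proof -
    have I: "integrable lborel (\<lambda>v. \<Sum>\<^sub>\<infinity>j\<in>Jl m. \<integral>y. hl m j v y \<partial>NN)" by (rule GLl(3)[OF m])
    have M1: "(\<lambda>v. \<Sum>\<^sub>\<infinity>j\<in>Jl m. \<integral>y. hl m j v y \<partial>NN) \<in> borel_measurable lborel"
      using I by (rule borel_measurable_integrable)
    have M2: "(\<lambda>v. \<phi> m v * LsF m v) \<in> borel_measurable lborel"
    proof (rule borel_measurable_times)
      show "\<phi> m \<in> borel_measurable lborel" using phi_meas by simp
      show "LsF m \<in> borel_measurable lborel" using LsF_meas[of m] by simp
    qed
    have AE: "AE v in lborel. (\<Sum>\<^sub>\<infinity>j\<in>Jl m. \<integral>y. hl m j v y \<partial>NN) = \<phi> m v * LsF m v"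
      using GLl(2)[OF m]
    proof (rule eventually_mono)
      fix v assume s: "(\<lambda>j. \<integral>y. hl m j v y \<partial>NN) summable_on Jl m"
      show "(\<Sum>\<^sub>\<infinity>j\<in>Jl m. \<integral>y. hl m j v y \<partial>NN) = \<phi> m v * LsF m v"
      proof (cases "\<phi> m v = 0")
        case True
        then show ?thesis by (simp add: hl_inner)
      next
        case False
        have "Xl m v summable_on Jl m"
          using s unfolding hl_inner summable_on_cmult_right'[OF False] .
        then show ?thesis
          unfolding hl_inner infsum_cmult_right' by (simp add: Xl_LsF)
      qed
    qed
    show "(\<integral>v. (\<Sum>\<^sub>\<infinity>j\<in>Jl m. \<integral>y. hl m j v y \<partial>NN) \<partial>lborel) = (\<integral>v. \<phi> m v * LsF m v \<partial>lborel)"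
      by (rule integral_cong_AE[OF M1 M2 AE])
    show "integrable lborel (\<lambda>v. \<phi> m v * LsF m v)"
      using integrable_cong_AE[OF M1 M2 AE] I by simp
  qed
  have lval: "(\<Sum>\<^sub>\<infinity>m\<in>{1..}. \<Sum>\<^sub>\<infinity>j\<in>Jl m. \<integral>z. hl m j (fst z) (snd z) \<partial>(lborel \<Otimes>\<^sub>M NN)) = (\<Sum>\<^sub>\<infinity>i\<in>Iw. lw' i)"
  proof -
    have "(\<Sum>\<^sub>\<infinity>m\<in>{1..}. \<Sum>\<^sub>\<infinity>j\<in>Jl m. \<integral>z. hl m j (fst z) (snd z) \<partial>(lborel \<Otimes>\<^sub>M NN))
        = (\<Sum>\<^sub>\<infinity>m\<in>{1..}. \<Sum>\<^sub>\<infinity>j\<in>Jl m. lw m (fst j) (snd j))"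
    proof (intro infsum_cong)
      fix m j
      show "(\<integral>z. hl m j (fst z) (snd z) \<partial>(lborel \<Otimes>\<^sub>M NN)) = lw m (fst j) (snd j)"
        using hl_int[of m "fst j" "snd j"] by simp
    qed
    also have "\<dots> = (\<Sum>\<^sub>\<infinity>i\<in>Iw. lw' i)"
      using infsum_Sigma_reindex(1)[OF bij_loss, where h'="\<lambda>x. lw (fst x) (fst (snd x)) (snd (snd x))"] summable_lw
      by simp
    finally show ?thesis .
  qed
  have hasl: "((\<lambda>m. \<integral>v. \<phi> m v * LsF m v \<partial>lborel) has_sum (\<Sum>\<^sub>\<infinity>i\<in>Iw. lw' i)) {1..}"
    using GLl(1) unfolding lval by (subst (asm) has_sum_cong[of _ _ "\<lambda>m. \<integral>v. \<phi> m v * LsF m v \<partial>lborel"]) (auto simp: lfun)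
  have "((\<lambda>m. (\<integral>v. \<phi> m v * GsF m v \<partial>lborel) - (\<integral>v. \<phi> m v * LsF m v \<partial>lborel)) has_sum
          ((\<Sum>\<^sub>\<infinity>i\<in>Iw. gw' i) - (\<Sum>\<^sub>\<infinity>i\<in>Iw. lw' i))) {1..}"
    by (rule has_sum_diff_real[OF hasg hasl])
  then have "((\<lambda>m. \<integral>v. BME_strong A B f m v * \<phi> m v \<partial>lborel) has_sum
          ((\<Sum>\<^sub>\<infinity>i\<in>Iw. gw' i) - (\<Sum>\<^sub>\<infinity>i\<in>Iw. lw' i))) {1..}"
  proof (subst (asm) has_sum_cong)
    fix m :: nat assume "m \<in> {1..}"
    then have m: "1 \<le> m" by simp
    show "(\<integral>v. \<phi> m v * GsF m v \<partial>lborel) - (\<integral>v. \<phi> m v * LsF m v \<partial>lborel) = (\<integral>v. BME_strong A B f m v * \<phi> m v \<partial>lborel)"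
      unfolding BME_split using intg[OF m] intl[OF m] by simp
  qed
  then show ?thesis unfolding weak_value .
qed

end


theorem lemma2p1:
  fixes A :: "nat \<Rightarrow> nat \<Rightarrow> nat \<Rightarrow> real"
    and B :: "real \<Rightarrow> real \<Rightarrow> real"
    and f \<phi> :: "nat \<Rightarrow> 'a::euclidean_space \<Rightarrow> real"
    and C :: real
  assumes A_nonneg: "\<forall>m m1 m'. 1 \<le> m \<longrightarrow> 1 \<le> m1 \<longrightarrow> 1 \<le> m' \<longrightarrow> m' < m + m1 \<longrightarrow> 0 \<le> A m m1 m'"
    and A_sym: "\<forall>m m1 m'. 1 \<le> m \<longrightarrow> 1 \<le> m1 \<longrightarrow> 1 \<le> m' \<longrightarrow> m' < m + m1 \<longrightarrow>
                   A m m1 m' = A m1 m m' \<and> A m m1 m' = A m m1 (m + m1 - m')"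
    and B_nonneg: "\<forall>E c. 0 \<le> E \<longrightarrow> -1 \<le> c \<longrightarrow> c \<le> 1 \<longrightarrow> 0 \<le> B E c"
    and B_meas: "(\<lambda>(E, c). B E c) \<in> borel_measurable (restrict_space borel ({0..} \<times> {-1..1}))"
    and f_meas: "\<forall>m. f m \<in> borel_measurable lborel"
    and f_decay: "(\<integral>\<^sup>+m. (\<integral>\<^sup>+m1. (\<Sum>m'=1..m+m1-1. ennreal (A m m1 m') *
                   nn_integral (lborel \<Otimes>\<^sub>M lborel \<Otimes>\<^sub>M sphere_measure)
                     (\<lambda>(v, v1, \<Omega>). ennreal (indicator precoll (v, v1, \<Omega>) * cross_B B m m1 v v1 \<Omega>
                                          * \<bar>f m v\<bar> * \<bar>f m1 v1\<bar>)))
                 \<partial>count_space {1..}) \<partial>count_space {1..}) < \<infinity>"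
    and phi_meas: "\<forall>m. \<phi> m \<in> borel_measurable lborel"
    and phi_bdd: "\<forall>m v. \<bar>\<phi> m v\<bar> \<le> C"
  shows "((\<lambda>m. \<integral>v. BME_strong A B f m v * \<phi> m v \<partial>lborel) has_sum BME_weak_rhs A B f \<phi>) {1..}"
proof -
  have "bme A B f \<phi> C"
    unfolding bme_def using assms by blast
  then show ?thesis by (rule bme.main)
qed

end
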